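(* Solutions of the equations $\frac{u(\mathfrak{z}_2)-u(\mathfrak{z}_1)}{u(\mathfrak{z}_3)-u(\mathfrak{z}_2)}=\frac{v(\mathfrak{z}_3)-v(\mathfrak{z}_2)}{v(\mathfrak{z}_1)-v(\mathfrak{z}_3)}$ (on all positively oriented elementary triangles) satisfying the constraints \[ \alpha u=k\frac{f_0g_0f_3}{f_0g_0+g_0f_3+f_3g_3}+\ell\frac{f_2g_2f_5}{f_2g_2+g_2f_5+f_5g_5}+m\frac{f_4g_4f_1}{f_4g_4+g_4f_1+f_1g_1}, \] \[ \beta v=k\frac{g_0f_3g_3}{f_0g_0+g_0f_3+f_3g_3}+\ell\frac{g_2f_5g_5}{f_2g_2+g_2f_5+f_5g_5}+m\frac{g_4f_1g_1}{f_4g_4+g_4f_1+f_1g_1} \] are isomonodromic. The corresponding matrix $\mathcal{A}_{k,\ell,m}$ is given by the following formulas: \begin{equation} \mathcal{A}_{k,\ell,m}=\frac{C_{k,\ell,m}}{1+\mu}+\frac{D(\mathfrak{z})}{\mu}, \end{equation} where $C_{k,\ell,m}$ and $D(\mathfrak{z})$ are $\mu$--independent matrices: \begin{equation} C_{k,\ell,m}=kP_0(\mathfrak{z})+\ell P_2(\mathfrak{z})+mP_4(\mathfrak{z}), \end{equation} $P_{0,2,4}$ are rank 1 matrices \begin{equation} P_j(\mathfrak{z})=\frac{1}{f_jg_j+g_jf_{j+3}+f_{j+3}g_{j+3}} \begin{pmatrix} f_jg_j & -f_jg_jf_{j+3} & f_jg_jf_{j+3}g_{j+3} \\ -g_j &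 g_jf_{j+3} & -g_jf_{j+3}g_{j+3} \\ 1 & -f_{j+3} & f_{j+3}g_{j+3} \end{pmatrix},\quad j=0,2,4, \end{equation} and the matrix $D$ is well defined on $V(\mathcal{T}\mathcal{L})$ and not only on its covering $\mathbb Z^3$: \begin{equation} D(\mathfrak{z})=\begin{pmatrix} -(2\alpha+\beta)/3 & \alpha u & \beta a-\alpha a' \\ 0 & (\alpha-\beta)/3 & \beta v \\ 0 & 0 & (2\beta+\alpha)/3 \end{pmatrix}, \end{equation} where the functions $a,a':V(\mathcal{T}\mathcal{L})\mapsto\mathbb C$ are solutions of the equations $a(\mathfrak{z}_2)-a(\mathfrak{z}_1)=v(\mathfrak{z}_1)\big(u(\mathfrak{z}_2)-u(\mathfrak{z}_1)\big)$ and $a'(\mathfrak{z}_2)-a'(\mathfrak{z}_1)=u(\mathfrak{z}_2)\big(v(\mathfrak{z}_2)-v(\mathfrak{z}_1)\big)$ for positively oriented edges $(\mathfrak{z}_1,\mathfrak{z}_2)$.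
   Context: The regular triangular lattice $\mathcal{T}\mathcal{L}$ has vertices $\mathfrak{z}=k+\ell\omega+m\omega^2$, $\omega=e^{2\pi i/3}$, $(k,\ell,m)\in\mathbb Z^3$ modulo $(n,n,n)$; positively oriented edges are $(\mathfrak{z},\mathfrak{z}+1)$, $(\mathfrak{z},\mathfrak{z}+\omega)$, $(\mathfrak{z},\mathfrak{z}+\omega^2)$, and a positively oriented elementary triangle has consecutive vertices $\mathfrak{z}_1,\mathfrak{z}_2,\mathfrak{z}_3$ with $\mathfrak{z}_2-\mathfrak{z}_1,\mathfrak{z}_3-\mathfrak{z}_2,\mathfrak{z}_1-\mathfrak{z}_3\in\{1,\omega,\omega^2\}$. $u,v$ are functions on vertices vanishing at $0$; on each positively oriented edge $(\mathfrak{z}_1,\mathfrak{z}_2)$, $f=u(\mathfrak{z}_2)-u(\mathfrak{z}_1)$, $g=v(\mathfrak{z}_2)-v(\mathfrak{z}_1)$, $h=1/(fg)$. At vertex $\mathfrak{z}$ with representative $(k,\ell,m)$, the edges $\mathfrak{e}_0=(\mathfrak{z},\mathfrak{z}+1)$, $\mathfrak{e}_2=(\mathfrak{z},\mathfrak{z}+\omega)$, $\mathfrak{e}_4=(\mathfrak{z},\mathfrak{z}+\omega^2)$, $\mathfrak{e}_1=(\mathfrak{z}-\omega^2,\mathfrak{z})$, $\mathfrak{e}_3=(\mathfrak{z}-1,\mathfrak{z})$, $\mathfrak{e}_5=(\mathfrak{z}-\omega,\mathfrak{z})$ carry $f_j,g_j$, and $u=u(\mathfrak{z})$, $v=v(\mathfrak{z})$;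 $\alpha,\beta\in\mathbb C$. Let $\mathcal{L}(\mathfrak{e},\mu)=\begin{pmatrix} 1 & f & 0 \\ 0 & 1 & g \\ \mu h & 0 & 1\end{pmatrix}$. A solution is called isomonodromic if there is a wave function $\Psi:\mathbb Z^3\to GL(3,\mathbb C)[\mu]$ with $\Psi_{k+n,\ell+n,m+n}=(1+\mu)^n\Psi_{k,\ell,m}$, $\Psi_{k+1,\ell,m}=\mathcal{L}(\mathfrak{e}_0,\mu)\Psi_{k,\ell,m}$, $\Psi_{k,\ell+1,m}=\mathcal{L}(\mathfrak{e}_2,\mu)\Psi_{k,\ell,m}$, $\Psi_{k,\ell,m+1}=\mathcal{L}(\mathfrak{e}_4,\mu)\Psi_{k,\ell,m}$, satisfying also $\frac{d}{d\mu}\Psi_{k,\ell,m}=\mathcal{A}_{k,\ell,m}(\mu)\Psi_{k,\ell,m}$ with $\mathcal{A}_{k,\ell,m}$ meromorphic in $\mu$ with poles whose positions and orders are independent of $k,\ell,m$. *)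

theory Defs
  imports "HOL-Analysis.Analysis"
begin

text \<open>Vertices of the triangular lattice are represented by integer triples (k,l,m)
  (the vertex being k + l*omega + m*omega^2); since 1 + omega + omega^2 = 0, a function on
  vertices is a function on triples invariant under the shift (1,1,1).\<close>

type_synonym vfun = "int \<Rightarrow> int \<Rightarrow> int \<Rightarrow> complex"

definition vertex_fun :: "vfun \<Rightarrow> bool" where
  "vertex_fun w \<longleftrightarrow> (\<forall>k l m. w (k+1) (l+1) (m+1) = w k l m)"

text \<open>Edge differences at the vertex with representative (k,l,m):
  e0 = (z,z+1), e2 = (z,z+omega), e4 = (z,z+omega^2),
  e1 = (z-omega^2,z), e3 = (z-1,z), e5 = (z-omega,z).\<close>

definition d0 :: "vfun \<Rightarrow> int \<Rightarrow> int \<Rightarrow> int \<Rightarrow> complex" where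
  "d0 w k l m = w (k+1) l m - w k l m"
definition d2 :: "vfun \<Rightarrow> int \<Rightarrow> int \<Rightarrow> int \<Rightarrow> complex" where
  "d2 w k l m = w k (l+1) m - w k l m"
definition d4 :: "vfun \<Rightarrow> int \<Rightarrow> int \<Rightarrow> int \<Rightarrow> complex" where
  "d4 w k l m = w k l (m+1) - w k l m"
definition d1 :: "vfun \<Rightarrow> int \<Rightarrow> int \<Rightarrow> int \<Rightarrow> complex" where
  "d1 w k l m = w k l m - w k l (m-1)"
definition d3 :: "vfun \<Rightarrow> int \<Rightarrow> int \<Rightarrow> int \<Rightarrow> complex" where
  "d3 w k l m = w k l m - w (k-1) l m"
definition d5 :: "vfun \<Rightarrow> int \<Rightarrow> int \<Rightarrow> int \<Rightarrow> complex" where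
  "d5 w k l m = w k l m - w k (l-1) m"

definition tri_eq :: "vfun \<Rightarrow> vfun \<Rightarrow> int \<times> int \<times> int \<Rightarrow> int \<times> int \<times> int \<Rightarrow> int \<times> int \<times> int \<Rightarrow> bool" where
  "tri_eq u v p1 p2 p3 \<longleftrightarrow>
     (let U = (\<lambda>(k,l,m). u k l m); V = (\<lambda>(k,l,m). v k l m) in
      (U p2 - U p1) / (U p3 - U p2) = (V p3 - V p2) / (V p1 - V p3))"

text \<open>The positively oriented elementary triangles are exactly
  (z, z+1, z+1+omega) and (z, z+1, z+1+omega^2) for vertices z.\<close>
definition triangle_eqs :: "vfun \<Rightarrow> vfun \<Rightarrow> bool" where
  "triangle_eqs u v \<longleftrightarrow> (\<forall>k l m.
     tri_eq u v (k,l,m) (k+1,l,m) (k+1,l+1,m) \<and>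
     tri_eq u v (k,l,m) (k+1,l,m) (k+1,l,m+1))"

definition mat3 :: "complex \<Rightarrow> complex \<Rightarrow> complex \<Rightarrow> complex \<Rightarrow> complex \<Rightarrow> complex \<Rightarrow>
    complex \<Rightarrow> complex \<Rightarrow> complex \<Rightarrow> complex^3^3" where
  "mat3 a11 a12 a13 a21 a22 a23 a31 a32 a33 =
     (\<chi> i j. if i = 1 then (if j = 1 then a11 else if j = 2 then a12 else a13)
             else if i = 2 then (if j = 1 then a21 else if j = 2 then a22 else a23)
             else (if j = 1 then a31 else if j = 2 then a32 else a33))"

definition smat :: "complex \<Rightarrow> complex^3^3 \<Rightarrow> complex^3^3" where
  "smat c M = (\<chi> i j. c * M $ i $ j)"

text \<open>Lax matrix L(e,mu) for an edge with f, g (and h = 1/(f g)).\<close>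
definition Lmat :: "complex \<Rightarrow> complex \<Rightarrow> complex \<Rightarrow> complex^3^3" where
  "Lmat f g \<mu> = mat3 1 f 0  0 1 g  (\<mu> * (1 / (f * g))) 0 1"

text \<open>P_j with f = f_j, g = g_j, f' = f_{j+3}, g' = g_{j+3}.\<close>
definition Pmat :: "complex \<Rightarrow> complex \<Rightarrow> complex \<Rightarrow> complex \<Rightarrow> complex^3^3" where
  "Pmat f g f' g' = smat (1 / (f*g + g*f' + f'*g'))
     (mat3 (f*g) (- f*g*f') (f*g*f'*g')
           (- g) (g*f') (- g*f'*g')
           1 (- f') (f'*g'))"

definition Cmat :: "vfun \<Rightarrow> vfun \<Rightarrow> int \<Rightarrow> int \<Rightarrow> int \<Rightarrow> complex^3^3" where
  "Cmat u v k l m =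
     smat (of_int k) (Pmat (d0 u k l m) (d0 v k l m) (d3 u k l m) (d3 v k l m)) +
     smat (of_int l) (Pmat (d2 u k l m) (d2 v k l m) (d5 u k l m) (d5 v k l m)) +
     smat (of_int m) (Pmat (d4 u k l m) (d4 v k l m) (d1 u k l m) (d1 v k l m))"

definition Dmat :: "complex \<Rightarrow> complex \<Rightarrow> vfun \<Rightarrow> vfun \<Rightarrow> vfun \<Rightarrow> vfun \<Rightarrow>
    int \<Rightarrow> int \<Rightarrow> int \<Rightarrow> complex^3^3" where
  "Dmat \<alpha> \<beta> u v a a' k l m =
     mat3 (- (2*\<alpha> + \<beta>) / 3) (\<alpha> * u k l m) (\<beta> * a k l m - \<alpha> * a' k l m)
          0 ((\<alpha> - \<beta>) / 3) (\<beta> * v k l m)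
          0 0 ((2*\<beta> + \<alpha>) / 3)"

definition Amat :: "complex \<Rightarrow> complex \<Rightarrow> vfun \<Rightarrow> vfun \<Rightarrow> vfun \<Rightarrow> vfun \<Rightarrow>
    int \<Rightarrow> int \<Rightarrow> int \<Rightarrow> complex \<Rightarrow> complex^3^3" where
  "Amat \<alpha> \<beta> u v a a' k l m \<mu> =
     smat (1 / (1 + \<mu>)) (Cmat u v k l m) + smat (1 / \<mu>) (Dmat \<alpha> \<beta> u v a a' k l m)"

end

theory Submission
  imports Defs
begin

lemma mat3_nth[simp]:
  "mat3 a11 a12 a13 a21 a22 a23 a31 a32 a33 $ 1 $ 1 = a11"
  "mat3 a11 a12 a13 a21 a22 a23 a31 a32 a33 $ 1 $ 2 = a12"
  "mat3 a11 a12 a13 a21 a22 a23 a31 a32 a33 $ 1 $ 3 = a13"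
  "mat3 a11 a12 a13 a21 a22 a23 a31 a32 a33 $ 2 $ 1 = a21"
  "mat3 a11 a12 a13 a21 a22 a23 a31 a32 a33 $ 2 $ 2 = a22"
  "mat3 a11 a12 a13 a21 a22 a23 a31 a32 a33 $ 2 $ 3 = a23"
  "mat3 a11 a12 a13 a21 a22 a23 a31 a32 a33 $ 3 $ 1 = a31"
  "mat3 a11 a12 a13 a21 a22 a23 a31 a32 a33 $ 3 $ 2 = a32"
  "mat3 a11 a12 a13 a21 a22 a23 a31 a32 a33 $ 3 $ 3 = a33"
  by (simp_all add: mat3_def)

lemma mat3_eq_iff: "(M::complex^3^3) = N \<longleftrightarrow>
  M$1$1 = N$1$1 \<and> M$1$2 = N$1$2 \<and> M$1$3 = N$1$3 \<and>
  M$2$1 = N$2$1 \<and> M$2$2 = N$2$2 \<and> M$2$3 = N$2$3 \<and>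
  M$3$1 = N$3$1 \<and> M$3$2 = N$3$2 \<and> M$3$3 = N$3$3"
  by (auto simp: vec_eq_iff forall_3)

lemma mmult_nth: "((M::complex^3^3) ** N) $ i $ j = M$i$1 * N$1$j + M$i$2 * N$2$j + M$i$3 * N$3$j"
  by (simp add: matrix_matrix_mult_def sum_3)

lemma mat3_mult: "mat3 a11 a12 a13 a21 a22 a23 a31 a32 a33 ** mat3 b11 b12 b13 b21 b22 b23 b31 b32 b33 =
  mat3 (a11*b11+a12*b21+a13*b31) (a11*b12+a12*b22+a13*b32) (a11*b13+a12*b23+a13*b33)
       (a21*b11+a22*b21+a23*b31) (a21*b12+a22*b22+a23*b32) (a21*b13+a22*b23+a23*b33)
       (a31*b11+a32*b21+a33*b31) (a31*b12+a32*b22+a33*b32) (a31*b13+a32*b23+a33*b33)"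
  by (simp add: mat3_eq_iff mmult_nth)

lemma mat_mat3: "(mat c :: complex^3^3) = mat3 c 0 0 0 c 0 0 0 c"
  by (simp add: mat3_eq_iff mat_def)


lemma smat_nth[simp]: "smat c M $ i $ j = c * M $ i $ j"
  by (simp add: smat_def)

lemma smat_mat3: "smat c (mat3 a11 a12 a13 a21 a22 a23 a31 a32 a33) =
   mat3 (c*a11) (c*a12) (c*a13) (c*a21) (c*a22) (c*a23) (c*a31) (c*a32) (c*a33)"
  by (simp add: mat3_eq_iff)

lemma mat3_add: "mat3 a11 a12 a13 a21 a22 a23 a31 a32 a33 + mat3 b11 b12 b13 b21 b22 b23 b31 b32 b33 =
   mat3 (a11+b11) (a12+b12) (a13+b13) (a21+b21) (a22+b22) (a23+b23) (a31+b31) (a32+b32) (a33+b33)"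
  by (simp add: mat3_eq_iff)

lemma mat3_diff: "mat3 a11 a12 a13 a21 a22 a23 a31 a32 a33 - mat3 b11 b12 b13 b21 b22 b23 b31 b32 b33 =
   mat3 (a11-b11) (a12-b12) (a13-b13) (a21-b21) (a22-b22) (a23-b23) (a31-b31) (a32-b32) (a33-b33)"
  by (simp add: mat3_eq_iff)

lemma mat3_expand: "(M::complex^3^3) = mat3 (M$1$1) (M$1$2) (M$1$3) (M$2$1) (M$2$2) (M$2$3) (M$3$1) (M$3$2) (M$3$3)"
  by (simp add: mat3_eq_iff)

lemma mat3_zero: "(0::complex^3^3) = mat3 0 0 0 0 0 0 0 0 0"
  by (simp add: mat3_eq_iff)

definition Lh :: "complex \<Rightarrow> complex \<Rightarrow> complex \<Rightarrow> complex \<Rightarrow> complex^3^3" where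
  "Lh f g h \<mu> = mat3 1 f 0 0 1 g (\<mu>*h) 0 1"

lemma Lmat_Lh: "Lmat f g \<mu> = Lh f g (1/(f*g)) \<mu>"
  by (simp add: Lmat_def Lh_def)

definition trirel :: "complex \<Rightarrow> complex \<Rightarrow> complex \<Rightarrow> complex \<Rightarrow> complex \<Rightarrow> complex \<Rightarrow> bool" where
  "trirel u1 v1 u2 v2 u3 v3 \<longleftrightarrow>
     (u2-u1)*(v2-v1) + (u2-u1)*(v3-v2) + (u3-u2)*(v3-v2) = 0"

lemma trirel_rot: "trirel u1 v1 u2 v2 u3 v3 \<longleftrightarrow> trirel u2 v2 u3 v3 u1 v1"
  unfolding trirel_def by algebra

lemma tri_mono_h:
  fixes u1 u2 u3 v1 v2 v3 h1 h2 h3 \<mu> :: complex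
  assumes rel: "trirel u1 v1 u2 v2 u3 v3"
    and h: "(u2-u1)*(v2-v1)*h1 = 1" "(u3-u2)*(v3-v2)*h2 = 1" "(u1-u3)*(v1-v3)*h3 = 1"
  shows "Lh (u1-u3) (v1-v3) h3 \<mu> ** Lh (u3-u2) (v3-v2) h2 \<mu> ** Lh (u2-u1) (v2-v1) h1 \<mu>
     = mat (1+\<mu>)"
  unfolding Lh_def mat3_mult mat_mat3 mat3_eq_iff mat3_nth
  using rel h unfolding trirel_def
  apply (intro conjI)
  by algebra+

lemma tri_mono:
  fixes u1 u2 u3 v1 v2 v3 \<mu> :: complex
  assumes rel: "trirel u1 v1 u2 v2 u3 v3"
    and nz: "u2 \<noteq> u1" "u3 \<noteq> u2" "u1 \<noteq> u3" "v2 \<noteq> v1" "v3 \<noteq> v2" "v1 \<noteq> v3"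
  shows "Lmat (u1-u3) (v1-v3) \<mu> ** Lmat (u3-u2) (v3-v2) \<mu> ** Lmat (u2-u1) (v2-v1) \<mu>
     = mat (1+\<mu>)"
  unfolding Lmat_Lh
  by (rule tri_mono_h[OF rel]) (use nz in auto)

lemma mat3_cong: "a11=b11 \<Longrightarrow> a12=b12 \<Longrightarrow> a13=b13 \<Longrightarrow> a21=b21 \<Longrightarrow> a22=b22 \<Longrightarrow> a23=b23 \<Longrightarrow>
  a31=b31 \<Longrightarrow> a32=b32 \<Longrightarrow> a33=b33 \<Longrightarrow>
  mat3 a11 a12 a13 a21 a22 a23 a31 a32 a33 = mat3 b11 b12 b13 b21 b22 b23 b31 b32 b33"
  by simp

lemma aux_div: "(Q::complex) \<noteq> 0 \<Longrightarrow> P \<noteq> 0 \<Longrightarrow> N*Q = -P \<Longrightarrow> \<mu>*(N/P) = - (\<mu>/Q)"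
proof -
  assume a: "Q \<noteq> 0" "P \<noteq> 0" "N*Q = -P"
  have "N = (N*Q)/Q" using a(1) by simp
  also have "\<dots> = -P/Q" using a by simp
  finally have "N = -P/Q" .
  then have "\<mu>*(N/P) = \<mu>*((-P/Q)/P)" by simp
  also have "\<dots> = - (\<mu>/Q)" using a by simp
  finally show ?thesis .
qed

lemma Lmat_prod_tri:
  fixes f1 f2 g1 g2 \<mu> :: complex
  assumes rel: "f1*g1 + f1*g2 + f2*g2 = 0"
    and nz: "f1 \<noteq> 0" "f2 \<noteq> 0" "g1 \<noteq> 0" "g2 \<noteq> 0" "f1+f2 \<noteq> 0" "g1+g2 \<noteq> 0"
  shows "Lmat f2 g2 \<mu> ** Lmat f1 g1 \<mu> =
     mat3 1 (f1+f2) ((f1+f2)*(g1+g2)) (-\<mu>/(f1+f2)) 1 (g1+g2) (-\<mu>/((f1+f2)*(g1+g2))) (-\<mu>/(g1+g2)) 1"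
proof -
  have k1: "f2*g1 = (f1+f2)*(g1+g2)" using rel by algebra
  have k2a: "g2*(f1+f2) = -(f1*g1)" using rel by algebra
  have k2: "g2 * \<mu> / (f1 * g1) = - (\<mu> / (f1 + f2))"
    using k2a nz by (simp add: field_simps)
  have k3a: "f1*(g1+g2) = -(f2*g2)" using rel by algebra
  have k3: "\<mu> * f1 / (f2 * g2) = - (\<mu> / (g1 + g2))"
    using k3a nz by (simp add: field_simps)
  have k4a: "(f1*g1 + f2*g2)*((f1+f2)*(g1+g2)) = -(f1*g1*(f2*g2))"
    using rel k1 by algebra
  have k4: "\<mu> / (f2 * g2) + \<mu> / (f1 * g1) = - (\<mu> / ((f1 + f2) * (g1 + g2)))"
  proof -
    have "\<mu> / (f2 * g2) + \<mu> / (f1 * g1) = \<mu>*((f1*g1 + f2*g2)/((f1*g1)*(f2*g2)))"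
      using nz by (simp add: field_simps)
    also have "\<dots> = - (\<mu> / ((f1 + f2) * (g1 + g2)))"
      by (rule aux_div) (use nz k4a in auto)
    finally show ?thesis .
  qed
  show ?thesis unfolding Lmat_def mat3_mult
    apply (rule mat3_cong)
    apply simp_all
    by (fact k1 k2 k4 k3)+
qed


definition Linv :: "complex \<Rightarrow> complex \<Rightarrow> complex \<Rightarrow> complex^3^3" where
  "Linv f g \<mu> = smat (1/(1+\<mu>))
     (mat3 1 (-f) (f*g) (\<mu>*(1/(f*g))*g) 1 (-g) (-(\<mu>*(1/(f*g)))) (\<mu>*(1/(f*g))*f) 1)"

lemma Linv_Lh_aux:
  assumes "f*g*h = 1" "(1+\<mu>)*c = 1"
  shows "smat c (mat3 1 (-f) (f*g) (\<mu>*h*g) 1 (-g) (-(\<mu>*h)) (\<mu>*h*f) 1) ** Lh f g h \<mu> = mat 1"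
  unfolding smat_mat3 Lh_def mat3_mult mat_mat3 mat3_eq_iff mat3_nth using assms
  apply (intro conjI)
  by (algebra | simp add: algebra_simps)+

lemma L_Linv_Lh_aux:
  assumes "f*g*h = 1" "(1+\<mu>)*c = 1"
  shows "Lh f g h \<mu> ** smat c (mat3 1 (-f) (f*g) (\<mu>*h*g) 1 (-g) (-(\<mu>*h)) (\<mu>*h*f) 1) = mat 1"
  unfolding smat_mat3 Lh_def mat3_mult mat_mat3 mat3_eq_iff mat3_nth using assms
  apply (intro conjI)
  by (algebra | simp add: algebra_simps)+

lemma Linv_L:
  assumes "f \<noteq> 0" "g \<noteq> 0" "\<mu> \<noteq> -1"
  shows "Linv f g \<mu> ** Lmat f g \<mu> = mat 1" "Lmat f g \<mu> ** Linv f g \<mu> = mat 1"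
proof -
  have a: "f*g*(1/(f*g)) = 1" using assms by simp
  have b: "(1+\<mu>)*(1/(1+\<mu>)) = 1" using assms
    by (metis add.commute add_eq_0_iff2 divide_self_if times_divide_eq_right mult_1_right)
  show "Linv f g \<mu> ** Lmat f g \<mu> = mat 1"
    unfolding Linv_def Lmat_Lh by (rule Linv_Lh_aux[OF a b])
  show "Lmat f g \<mu> ** Linv f g \<mu> = mat 1"
    unfolding Linv_def Lmat_Lh by (rule L_Linv_Lh_aux[OF a b])
qed

definition mderiv :: "(complex \<Rightarrow> complex^3^3) \<Rightarrow> complex^3^3 \<Rightarrow> complex \<Rightarrow> bool" where
  "mderiv F F' \<mu> \<longleftrightarrow> (\<forall>i j. ((\<lambda>x. F x $ i $ j) has_field_derivative F' $ i $ j) (at \<mu>))"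

lemma mderiv_mult:
  assumes "mderiv F F' \<mu>" "mderiv G G' \<mu>"
  shows "mderiv (\<lambda>x. F x ** G x) (F' ** G \<mu> + F \<mu> ** G') \<mu>"
  unfolding mderiv_def
proof (intro allI)
  fix i j
  have d: "\<And>i j. ((\<lambda>x. F x $ i $ j) has_field_derivative F' $ i $ j) (at \<mu>)"
          "\<And>i j. ((\<lambda>x. G x $ i $ j) has_field_derivative G' $ i $ j) (at \<mu>)"
    using assms unfolding mderiv_def by auto
  have "((\<lambda>x. F x $i$1 * G x $1$j + F x $i$2 * G x $2$j + F x $i$3 * G x $3$j) has_field_derivative
     (F'$i$1 * G \<mu> $1$j + G'$1$j * F \<mu> $i$1) + (F'$i$2 * G \<mu> $2$j + G'$2$j * F \<mu> $i$2)
      + (F'$i$3 * G \<mu> $3$j + G'$3$j * F \<mu> $i$3)) (at \<mu>)"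
    by (intro DERIV_add DERIV_mult d)
  then show "((\<lambda>x. (F x ** G x) $ i $ j) has_field_derivative (F' ** G \<mu> + F \<mu> ** G') $ i $ j) (at \<mu>)"
    unfolding mmult_nth by (rule DERIV_cong) (simp add: mmult_nth algebra_simps)
qed

lemma mderiv_transform:
  assumes "mderiv F F' \<mu>" "open S" "\<mu> \<in> S" "\<And>x. x \<in> S \<Longrightarrow> F x = G x"
  shows "mderiv G F' \<mu>"
  unfolding mderiv_def
proof (intro allI)
  fix i j
  show "((\<lambda>x. G x $ i $ j) has_field_derivative F' $ i $ j) (at \<mu>)"
    by (rule has_field_derivative_transform_within_open[where f="\<lambda>x. F x $ i $ j", OF _ assms(2,3)])
       (use assms(1,4) in \<open>auto simp: mderiv_def\<close>)
qed

lemma mderiv_cong: "mderiv F F' \<mu> \<Longrightarrow> F' = G' \<Longrightarrow> mderiv F G' \<mu>"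
  by simp

definition Hm :: "complex \<Rightarrow> complex \<Rightarrow> complex^3^3" where
  "Hm f g = mat3 0 0 0 0 0 0 (1/(f*g)) 0 0"

lemma deriv_xc: "((\<lambda>x. x * c) has_field_derivative (c::complex)) (at \<mu>)"
  by (rule DERIV_cong[OF DERIV_cmult_right[OF DERIV_ident]]) simp

lemma deriv_xdiv: "((\<lambda>x. x / c) has_field_derivative 1/(c::complex)) (at \<mu>)"
  using deriv_xc[of "1/c"] by simp

lemma mderiv_Lmat: "mderiv (Lmat f g) (Hm f g) \<mu>"
  unfolding mderiv_def forall_3 Lmat_def Hm_def mat3_nth
  by (simp add: deriv_xdiv)

lemma deriv_frac_lin:
  fixes a b \<mu> :: complex
  assumes "\<mu> \<noteq> -1"
  shows "((\<lambda>x. (1/(1+x)) * (a + b*x)) has_field_derivative (b-a)/(1+\<mu>)^2) (at \<mu>)"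
proof -
  have nz: "1 + \<mu> \<noteq> 0" using assms by (metis add.commute add_eq_0_iff2)
  have D0: "((\<lambda>x. (a + b*x) / (1+x)) has_field_derivative ((0 + (0*\<mu> + 1*b))*(1+\<mu>) - (a+b*\<mu>)*(0+1))/((1+\<mu>)*(1+\<mu>))) (at \<mu>)"
    by (intro DERIV_divide DERIV_add DERIV_mult DERIV_const DERIV_ident nz)
  have eq: "(\<lambda>x. (1/(1+x)) * (a + b*x)) = (\<lambda>x. (a + b*x) / (1+x))"
    by (simp add: field_simps)
  have D: "((\<lambda>x. (1/(1+x)) * (a + b*x)) has_field_derivative ((0 + (0*\<mu> + 1*b))*(1+\<mu>) - (a+b*\<mu>)*(0+1))/((1+\<mu>)*(1+\<mu>))) (at \<mu>)"
    unfolding eq by (rule D0)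
  show ?thesis
    by (rule DERIV_cong[OF D]) (use nz in \<open>simp add: field_simps power2_eq_square\<close>)
qed


definition La :: "complex \<Rightarrow> complex \<Rightarrow> complex^3^3" where
  "La f g = mat3 1 (-f) (f*g) 0 1 (-g) 0 0 1"
definition Lb :: "complex \<Rightarrow> complex \<Rightarrow> complex^3^3" where
  "Lb f g = mat3 0 0 0 (1/(f*g)*g) 0 0 (-(1/(f*g))) (1/(f*g)*f) 0"

lemma cases3: "(P (1::3) \<Longrightarrow> P 2 \<Longrightarrow> P 3 \<Longrightarrow> P i)"
  using exhaust_3[of i] by auto

lemma Linv_entry: "Linv f g x $ i $ j = (1/(1+x)) * (La f g $i$j + Lb f g $i$j * x)"
  using exhaust_3[of i] exhaust_3[of j]
  by (auto simp: Linv_def La_def Lb_def)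

lemma LaLb_id: "f \<noteq> 0 \<Longrightarrow> g \<noteq> 0 \<Longrightarrow>
   Lb f g $i$j - La f g $i$j = -(1/(f*g)) * La f g $i$3 * La f g $1$j"
  using exhaust_3[of i] exhaust_3[of j]
  by (auto simp: La_def Lb_def)

lemma LHL_entry: "(Linv f g \<mu> ** Hm f g ** Linv f g \<mu>) $ i $ j =
   (1/(1+\<mu>))^2 * (1/(f*g)) * La f g $i$3 * La f g $1$j"
  unfolding mmult_nth Linv_entry
  using exhaust_3[of i] exhaust_3[of j]
  by (auto simp: Hm_def La_def Lb_def power2_eq_square)

lemma mderiv_Linv:
  assumes "f \<noteq> 0" "g \<noteq> 0" "\<mu> \<noteq> -1"
  shows "mderiv (Linv f g) (-(Linv f g \<mu> ** Hm f g ** Linv f g \<mu>)) \<mu>"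
  unfolding mderiv_def
proof (intro allI)
  fix i j
  have "((\<lambda>x. (1/(1+x)) * (La f g $i$j + Lb f g $i$j * x)) has_field_derivative
          (Lb f g $i$j - La f g $i$j)/(1+\<mu>)^2) (at \<mu>)"
    by (rule deriv_frac_lin[OF assms(3)])
  moreover have "(-(Linv f g \<mu> ** Hm f g ** Linv f g \<mu>)) $ i $ j =
      -((1/(1+\<mu>))^2 * (1/(f*g)) * La f g $i$3 * La f g $1$j)"
    by (simp add: LHL_entry)
  moreover have "(Lb f g $i$j - La f g $i$j)/(1+\<mu>)^2 = -((1/(1+\<mu>))^2 * (1/(f*g)) * La f g $i$3 * La f g $1$j)"
    unfolding LaLb_id[OF assms(1,2)] by (simp add: power_divide)
  ultimately show "((\<lambda>x. Linv f g x $ i $ j) has_field_derivative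
      (-(Linv f g \<mu> ** Hm f g ** Linv f g \<mu>)) $ i $ j) (at \<mu>)"
    unfolding Linv_entry by metis
qed


fun fwdT :: "(int \<Rightarrow> complex^3^3) \<Rightarrow> complex^3^3 \<Rightarrow> nat \<Rightarrow> complex^3^3" where
  "fwdT A X 0 = X" | "fwdT A X (Suc n) = A (int n) ** fwdT A X n"
fun bwdT :: "(int \<Rightarrow> complex^3^3) \<Rightarrow> complex^3^3 \<Rightarrow> nat \<Rightarrow> complex^3^3" where
  "bwdT B X 0 = X" | "bwdT B X (Suc n) = B (- int n - 1) ** bwdT B X n"
definition transp :: "(int \<Rightarrow> complex^3^3) \<Rightarrow> (int \<Rightarrow> complex^3^3) \<Rightarrow> complex^3^3 \<Rightarrow> int \<Rightarrow> complex^3^3" where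
  "transp A B X n = (if 0 \<le> n then fwdT A X (nat n) else bwdT B X (nat (-n)))"

lemma transp_0[simp]: "transp A B X 0 = X" by (simp add: transp_def)

lemma transp_step:
  assumes "\<And>n. A n ** B n = mat 1"
  shows "transp A B X (n+1) = A n ** transp A B X n"
proof (cases "0 \<le> n")
  case True
  then have "nat (n+1) = Suc (nat n)" by simp
  then show ?thesis using True by (simp add: transp_def)
next
  case False
  define m where "m = nat (-n-1)"
  have nm: "nat (-n) = Suc m" "n = - int m - 1" using False by (auto simp: m_def)
  have t1: "transp A B X (n+1) = bwdT B X m"
  proof (cases "n = -1")
    case True then show ?thesis by (simp add: transp_def m_def)
  next
    case False
    then have "\<not> 0 \<le> n+1" "nat (-(n+1)) = m" using \<open>\<not> 0 \<le> n\<close> by (auto simp: m_def)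
    then show ?thesis by (simp add: transp_def)
  qed
  have t2: "transp A B X n = B n ** bwdT B X m"
    using False nm(1) by (simp add: transp_def nm(2)[symmetric])
  show ?thesis unfolding t1 t2 matrix_mul_assoc assms by simp
qed

lemma det_fwdT: "(\<And>n. det (A n) \<noteq> 0) \<Longrightarrow> det X \<noteq> 0 \<Longrightarrow> det (fwdT A X k) \<noteq> (0::complex)"
  by (induct k) (simp_all add: det_mul)
lemma det_bwdT: "(\<And>n. det (B n) \<noteq> 0) \<Longrightarrow> det X \<noteq> 0 \<Longrightarrow> det (bwdT B X k) \<noteq> (0::complex)"
  by (induct k) (simp_all add: det_mul)
lemma det_transp: "(\<And>n. det (A n) \<noteq> 0) \<Longrightarrow> (\<And>n. det (B n) \<noteq> 0) \<Longrightarrow> det X \<noteq> 0 \<Longrightarrow>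
   det (transp A B X k) \<noteq> (0::complex)"
  by (simp add: transp_def det_fwdT det_bwdT)

lemma int_induct2:
  assumes "P 0" "\<And>i. P i \<Longrightarrow> P (i+1)" "\<And>i. P (i+1) \<Longrightarrow> P i"
  shows "P (n::int)"
proof (induct n rule: int_induct[where k=0])
  case base then show ?case by (rule assms(1))
next
  case (step1 i) then show ?case using assms(2) by blast
next
  case (step2 i) then show ?case using assms(3)[of "i-1"] by simp
qed

lemma tri_eq_trirel:
  fixes u1 u2 u3 v1 v2 v3 :: complex
  assumes "(u2-u1)/(u3-u2) = (v3-v2)/(v1-v3)" "u3 \<noteq> u2" "v1 \<noteq> v3"
  shows "trirel u1 v1 u2 v2 u3 v3"
proof -
  have "(u2-u1)*(v1-v3) = (v3-v2)*(u3-u2)"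
    using assms by (simp add: frac_eq_eq)
  then show ?thesis unfolding trirel_def by algebra
qed

lemma rhombus_vals:
  fixes u1 u2 u3 u4 v1 v2 v3 v4 \<mu> :: complex
  assumes r1: "trirel u1 v1 u2 v2 u3 v3" and r2: "trirel u1 v1 u4 v4 u3 v3"
    and nz: "u2 \<noteq> u1" "u3 \<noteq> u2" "u4 \<noteq> u1" "u3 \<noteq> u4" "u3 \<noteq> u1"
            "v2 \<noteq> v1" "v3 \<noteq> v2" "v4 \<noteq> v1" "v3 \<noteq> v4" "v3 \<noteq> v1"
  shows "Lmat (u3-u2) (v3-v2) \<mu> ** Lmat (u2-u1) (v2-v1) \<mu> =
         Lmat (u3-u4) (v3-v4) \<mu> ** Lmat (u4-u1) (v4-v1) \<mu>"
proof -
  have e1: "(u2-u1) + (u3-u2) = u3-u1" "(v2-v1) + (v3-v2) = v3-v1"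
     "(u4-u1) + (u3-u4) = u3-u1" "(v4-v1) + (v3-v4) = v3-v1" by simp_all
  have A: "Lmat (u3-u2) (v3-v2) \<mu> ** Lmat (u2-u1) (v2-v1) \<mu> =
     mat3 1 (u3-u1) ((u3-u1)*(v3-v1)) (-\<mu>/(u3-u1)) 1 (v3-v1) (-\<mu>/((u3-u1)*(v3-v1))) (-\<mu>/(v3-v1)) 1"
    using Lmat_prod_tri[of "u2-u1" "v2-v1" "v3-v2" "u3-u2" \<mu>] r1 nz unfolding trirel_def e1
    by simp
  have B: "Lmat (u3-u4) (v3-v4) \<mu> ** Lmat (u4-u1) (v4-v1) \<mu> =
     mat3 1 (u3-u1) ((u3-u1)*(v3-v1)) (-\<mu>/(u3-u1)) 1 (v3-v1) (-\<mu>/((u3-u1)*(v3-v1))) (-\<mu>/(v3-v1)) 1"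
    using Lmat_prod_tri[of "u4-u1" "v4-v1" "v3-v4" "u3-u4" \<mu>] r2 nz unfolding trirel_def e1
    by simp
  show ?thesis using A B by simp
qed


lemma mm_add_r: "((A::complex^3^3) + B) ** C = A ** C + B ** C"
  by (simp add: vec_eq_iff mmult_nth algebra_simps)
lemma mm_add_l: "(A::complex^3^3) ** (B + C) = A ** B + A ** C"
  by (simp add: vec_eq_iff mmult_nth algebra_simps)
lemma mm_diff_r: "((A::complex^3^3) - B) ** C = A ** C - B ** C"
  by (simp add: vec_eq_iff mmult_nth algebra_simps)
lemma mm_diff_l: "(A::complex^3^3) ** (B - C) = A ** B - A ** C"
  by (simp add: vec_eq_iff mmult_nth algebra_simps)
lemma mm_neg_l: "(- (A::complex^3^3)) ** B = - (A ** B)"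
  by (simp add: vec_eq_iff mmult_nth algebra_simps)
lemma smat_mm_l: "smat c (A::complex^3^3) ** B = smat c (A ** B)"
  by (simp add: vec_eq_iff mmult_nth algebra_simps)
lemma smat_mm_r: "(A::complex^3^3) ** smat c B = smat c (A ** B)"
  by (simp add: vec_eq_iff mmult_nth algebra_simps)
lemma smat_add: "smat c ((A::complex^3^3) + B) = smat c A + smat c B"
  by (simp add: vec_eq_iff algebra_simps)
lemma smat_diff: "smat c ((A::complex^3^3) - B) = smat c A - smat c B"
  by (simp add: vec_eq_iff algebra_simps)
lemma smat_smat: "smat c (smat d (A::complex^3^3)) = smat (c*d) A"
  by (simp add: vec_eq_iff algebra_simps)
lemma smat_1: "smat 1 (A::complex^3^3) = A"
  by (simp add: vec_eq_iff)
lemma smat_0: "smat 0 (A::complex^3^3) = 0"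
  by (simp add: vec_eq_iff smat_def)
lemma smat_zero: "smat c (0::complex^3^3) = 0"
  unfolding vec_eq_iff by (simp add: smat_def)
lemma smat_add_scalar: "smat (c+d) (A::complex^3^3) = smat c A + smat d A"
  by (simp add: vec_eq_iff algebra_simps)
lemma mat_mm: "mat c ** (A::complex^3^3) = smat c A"
  by (simp add: vec_eq_iff mmult_nth mat_def forall_3)
lemma mm_mat: "(A::complex^3^3) ** mat c = smat c A"
  by (simp add: vec_eq_iff mmult_nth mat_def forall_3)


definition mv :: "complex^3^3 \<Rightarrow> complex^3 \<Rightarrow> complex^3" where
  "mv M x = (\<chi> i. M$i$1*x$1 + M$i$2*x$2 + M$i$3*x$3)"
definition vm :: "complex^3 \<Rightarrow> complex^3^3 \<Rightarrow> complex^3" where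
  "vm x M = (\<chi> j. x$1*M$1$j + x$2*M$2$j + x$3*M$3$j)"
definition cv :: "complex \<Rightarrow> complex \<Rightarrow> complex^3" where
  "cv a b = (\<chi> i. if i = 1 then a*b else if i = 2 then -b else 1)"
definition rv :: "complex \<Rightarrow> complex \<Rightarrow> complex^3" where
  "rv c d = (\<chi> i. if i = 1 then 1 else if i = 2 then -c else c*d)"

lemma cv_nth[simp]: "cv a b $ 1 = a*b" "cv a b $ 2 = -b" "cv a b $ 3 = 1"
  by (simp_all add: cv_def)
lemma rv_nth[simp]: "rv c d $ 1 = 1" "rv c d $ 2 = -c" "rv c d $ 3 = c*d"
  by (simp_all add: rv_def)

lemma mv_mv: "mv A (mv B x) = mv (A ** B) x"
  by (simp add: vec_eq_iff mv_def mmult_nth algebra_simps)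
lemma vm_vm: "vm (vm x A) B = vm x (A ** B)"
  by (simp add: vec_eq_iff vm_def mmult_nth algebra_simps)
lemma mv_zero: "mv A 0 = 0"
  by (simp add: vec_eq_iff mv_def)
lemma vm_zero: "vm 0 A = 0"
  by (simp add: vec_eq_iff vm_def)

lemma Lker: "a \<noteq> 0 \<Longrightarrow> b \<noteq> 0 \<Longrightarrow> mv (Lmat a b (-1)) (cv a b) = 0"
  by (simp add: vec_eq_iff mv_def forall_3 Lmat_def)
lemma Lkerv: "c \<noteq> 0 \<Longrightarrow> d \<noteq> 0 \<Longrightarrow> vm (rv c d) (Lmat c d (-1)) = 0"
  by (simp add: vec_eq_iff vm_def forall_3 Lmat_def)

lemma ker_col:
  assumes "mv (Lmat a b (-1)) w = 0"
  shows "w$1 = a*b*w$3" "w$2 = -b*w$3"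
proof -
  have e: "w$1 + a*w$2 = 0" "w$2 + b*w$3 = 0"
    using arg_cong[OF assms, of "\<lambda>x. x$1"] arg_cong[OF assms, of "\<lambda>x. x$2"]
    by (simp_all add: mv_def Lmat_def)
  show "w$2 = -b*w$3" using e by algebra
  show "w$1 = a*b*w$3" using e by algebra
qed

lemma ker_row:
  assumes "vm z (Lmat c d (-1)) = 0"
  shows "z$2 = -c*z$1" "z$3 = c*d*z$1"
proof -
  have e: "z$1*c + z$2 = 0" "z$2*d + z$3 = 0"
    using arg_cong[OF assms, of "\<lambda>x. x$2"] arg_cong[OF assms, of "\<lambda>x. x$3"]
    by (simp_all add: vm_def Lmat_def)
  show "z$2 = -c*z$1" using e by algebra
  show "z$3 = c*d*z$1" using e by algebra
qed

lemma Pmat_nth: "Pmat a b c d $ i $ j = (1/(a*b + b*c + c*d)) * (cv a b $ i * rv c d $ j)"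
  using exhaust_3[of i] exhaust_3[of j]
  by (auto simp: Pmat_def)

lemma Pmat_mm: "(Pmat a b c d ** M) $ i $ j = (1/(a*b + b*c + c*d)) * (cv a b $ i * vm (rv c d) M $ j)"
  by (simp add: mmult_nth Pmat_nth vm_def algebra_simps)
lemma mm_Pmat: "(M ** Pmat a b c d) $ i $ j = (1/(a*b + b*c + c*d)) * (mv M (cv a b) $ i * rv c d $ j)"
  by (simp add: mmult_nth Pmat_nth mv_def algebra_simps)

lemma Pmat_L_zero: "a \<noteq> 0 \<Longrightarrow> b \<noteq> 0 \<Longrightarrow> Pmat F G a b ** Lmat a b (-1) = 0"
  by (simp add: vec_eq_iff Pmat_mm Lkerv)
lemma L_Pmat_zero: "a \<noteq> 0 \<Longrightarrow> b \<noteq> 0 \<Longrightarrow> Lmat a b (-1) ** Pmat a b c d = 0"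
  by (simp add: vec_eq_iff mm_Pmat Lker)

lemma intertwine:
  fixes L W1 W2 :: "complex^3^3"
  assumes HA: "Lmat a2 b2 (-1) ** L = W1 ** Lmat a1 b1 (-1)"
      and HB: "L ** Lmat p1 q1 (-1) = Lmat p2 q2 (-1) ** W2"
      and nz: "a1 \<noteq> 0" "b1 \<noteq> 0" "p2 \<noteq> 0" "q2 \<noteq> 0"
      and den: "a1*b1 + b1*p1 + p1*q1 \<noteq> 0" "a2*b2 + b2*p2 + p2*q2 \<noteq> 0"
  shows "Pmat a2 b2 p2 q2 ** L = L ** Pmat a1 b1 p1 q1"
proof -
  define w where "w = mv L (cv a1 b1)"
  define z where "z = vm (rv p2 q2) L"
  have "mv (Lmat a2 b2 (-1)) w = 0"
    unfolding w_def mv_mv HA mv_mv[symmetric] Lker[OF nz(1,2)] mv_zero ..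
  note w = ker_col[OF this]
  have "vm z (Lmat p1 q1 (-1)) = 0"
    unfolding z_def vm_vm HB vm_vm[symmetric] Lkerv[OF nz(3,4)] vm_zero ..
  note z = ker_row[OF this]
  have key: "z$1 * (a1*b1 + b1*p1 + p1*q1) = w$3 * (a2*b2 + b2*p2 + p2*q2)"
  proof -
    have "z$1*(a1*b1) + z$2*(-b1) + z$3 = w$1 - p2*w$2 + p2*q2*w$3"
      unfolding z_def w_def by (simp add: vm_def mv_def algebra_simps)
    then show ?thesis unfolding w z by (simp add: algebra_simps)
  qed
  have "(Pmat a2 b2 p2 q2 ** L) $ i $ j = (L ** Pmat a1 b1 p1 q1) $ i $ j" for i j
  proof -
    have l: "(Pmat a2 b2 p2 q2 ** L) $ i $ j = (1/(a2*b2 + b2*p2 + p2*q2)) * (cv a2 b2 $ i * z $ j)"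
      unfolding Pmat_mm z_def ..
    have r: "(L ** Pmat a1 b1 p1 q1) $ i $ j = (1/(a1*b1 + b1*p1 + p1*q1)) * (w $ i * rv p1 q1 $ j)"
      unfolding mm_Pmat w_def ..
    have zj: "z $ j = z$1 * rv p1 q1 $ j" using exhaust_3[of j] z by auto
    have wi: "w $ i = w$3 * cv a2 b2 $ i" using exhaust_3[of i] w by auto
    have kk: "z$1 / (a2*b2 + b2*p2 + p2*q2) = w$3 / (a1*b1 + b1*p1 + p1*q1)"
      using key den by (simp add: frac_eq_eq)
    have "(1/(a2*b2 + b2*p2 + p2*q2)) * (cv a2 b2 $ i * (z$1 * rv p1 q1 $ j))
        = cv a2 b2 $ i * rv p1 q1 $ j * (z$1 / (a2*b2 + b2*p2 + p2*q2))" by simp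
    also have "\<dots> = cv a2 b2 $ i * rv p1 q1 $ j * (w$3 / (a1*b1 + b1*p1 + p1*q1))" unfolding kk ..
    also have "\<dots> = (1/(a1*b1 + b1*p1 + p1*q1)) * ((w$3 * cv a2 b2 $ i) * rv p1 q1 $ j)" by simp
    finally show ?thesis unfolding l r zj wi .
  qed
  then show ?thesis by (simp add: vec_eq_iff)
qed


definition Dm :: "complex \<Rightarrow> complex \<Rightarrow> complex \<Rightarrow> complex \<Rightarrow> complex \<Rightarrow> complex^3^3" where
  "Dm \<alpha> \<beta> uu vv X = mat3 (- (2*\<alpha> + \<beta>) / 3) (\<alpha> * uu) X 0 ((\<alpha> - \<beta>) / 3) (\<beta> * vv) 0 0 ((2*\<beta> + \<alpha>) / 3)"

lemma Dmat_Dm: "Dmat \<alpha> \<beta> u v a a' k l m = Dm \<alpha> \<beta> (u k l m) (v k l m) (\<beta> * a k l m - \<alpha> * a' k l m)"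
  by (simp add: Dmat_def Dm_def)

lemma compat_abs:
  fixes C C' D D' :: "complex^3^3"
  assumes i: "C' ** Lmat f g (-1) = Lmat f g (-1) ** C"
    and ii: "D' ** Lmat f g 0 = Lmat f g 0 ** D"
    and iii: "(C'+D') ** Hm f g - Hm f g ** (C+D) = Hm f g"
    and mu: "\<mu> \<noteq> 0" "1 + \<mu> \<noteq> 0"
  shows "(smat (1/(1+\<mu>)) C' + smat (1/\<mu>) D') ** Lmat f g \<mu>
          - Lmat f g \<mu> ** (smat (1/(1+\<mu>)) C + smat (1/\<mu>) D) = Hm f g"
proof -
  have L1: "Lmat f g \<mu> = Lmat f g (-1) + smat (1+\<mu>) (Hm f g)"
    unfolding Lmat_def Hm_def smat_mat3 mat3_add by (rule mat3_cong) (simp_all add: algebra_simps add_divide_distrib)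
  have L0: "Lmat f g \<mu> = Lmat f g 0 + smat \<mu> (Hm f g)"
    unfolding Lmat_def Hm_def smat_mat3 mat3_add by (rule mat3_cong) (simp_all add: algebra_simps add_divide_distrib)
  have eC: "C' ** Lmat f g \<mu> - Lmat f g \<mu> ** C = smat (1+\<mu>) (C' ** Hm f g - Hm f g ** C)"
    unfolding L1 mm_add_l mm_add_r smat_mm_l smat_mm_r i smat_diff by simp
  have eD: "D' ** Lmat f g \<mu> - Lmat f g \<mu> ** D = smat \<mu> (D' ** Hm f g - Hm f g ** D)"
    unfolding L0 mm_add_l mm_add_r smat_mm_l smat_mm_r ii smat_diff by simp
  have "(smat (1/(1+\<mu>)) C' + smat (1/\<mu>) D') ** Lmat f g \<mu>
          - Lmat f g \<mu> ** (smat (1/(1+\<mu>)) C + smat (1/\<mu>) D)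
      = smat (1/(1+\<mu>)) (C' ** Lmat f g \<mu> - Lmat f g \<mu> ** C)
          + smat (1/\<mu>) (D' ** Lmat f g \<mu> - Lmat f g \<mu> ** D)"
    unfolding mm_add_l mm_add_r smat_mm_l smat_mm_r smat_diff by simp
  also have "\<dots> = (C' ** Hm f g - Hm f g ** C) + (D' ** Hm f g - Hm f g ** D)"
    unfolding eC eD smat_smat using mu by (simp add: smat_1)
  also have "\<dots> = (C'+D') ** Hm f g - Hm f g ** (C+D)"
    unfolding mm_add_l mm_add_r by simp
  also have "\<dots> = Hm f g" by (rule iii)
  finally show ?thesis .
qed

lemma edge_M13:
  fixes C C' :: "complex^3^3" and f g Up Uq Vp Vq Xp Xq \<alpha> \<beta> :: complex
  assumes i: "C' ** Lmat f g (-1) = Lmat f g (-1) ** C"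
    and cu_q: "\<alpha>*Uq + C'$1$2 = 0"
    and cv_p: "\<beta>*Vp + C$2$3 = 0"
    and Xq: "Xq = Xp + \<beta>*Vp*f - \<alpha>*Uq*g"
  shows "C'$1$3 + Xq = C$1$3 + Xp"
proof -
  have e: "(C' ** Lmat f g (-1))$1$3 = (Lmat f g (-1) ** C)$1$3"
    using i by simp
  have e13: "C'$1$2*g + C'$1$3 = C$1$3 + f*C$2$3"
    using e by (simp add: mmult_nth Lmat_def)
  show ?thesis using e13 cv_p cu_q Xq by algebra
qed

lemma edge_lemma:
  fixes C C' :: "complex^3^3" and f g Up Uq Vp Vq Xp Xq \<alpha> \<beta> :: complex
  assumes i: "C' ** Lmat f g (-1) = Lmat f g (-1) ** C"
    and trC: "C'$1$1 + C'$2$2 + C'$3$3 = C$1$1 + C$2$2 + C$3$3 + 1"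
    and cu_p: "\<alpha>*Up + C$1$2 = 0" and cu_q: "\<alpha>*Uq + C'$1$2 = 0"
    and cv_p: "\<beta>*Vp + C$2$3 = 0" and cv_q: "\<beta>*Vq + C'$2$3 = 0"
    and Uq: "Uq = Up + f" and Vq: "Vq = Vp + g"
    and Xq: "Xq = Xp + \<beta>*Vp*f - \<alpha>*Uq*g"
    and M13: "C$1$3 + Xp = 0"
    and nz: "f \<noteq> 0" "g \<noteq> 0"
  shows "C'$1$3 + Xq = 0"
    and "\<mu> \<noteq> 0 \<Longrightarrow> 1 + \<mu> \<noteq> 0 \<Longrightarrow>
      (smat (1/(1+\<mu>)) C' + smat (1/\<mu>) (Dm \<alpha> \<beta> Uq Vq Xq)) ** Lmat f g \<mu>
       - Lmat f g \<mu> ** (smat (1/(1+\<mu>)) C + smat (1/\<mu>) (Dm \<alpha> \<beta> Up Vp Xp)) = Hm f g"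
proof -
  have e: "(C' ** Lmat f g (-1))$1$2 = (Lmat f g (-1) ** C)$1$2"
          "(C' ** Lmat f g (-1))$2$3 = (Lmat f g (-1) ** C)$2$3"
          "(C' ** Lmat f g (-1))$1$3 = (Lmat f g (-1) ** C)$1$3"
    using i by simp_all
  have e12: "C'$1$1*f + C'$1$2 = C$1$2 + f*C$2$2"
    using e(1) by (simp add: mmult_nth Lmat_def)
  have e23: "C'$2$2*g + C'$2$3 = C$2$3 + g*C$3$3"
    using e(2) by (simp add: mmult_nth Lmat_def)
  have e13: "C'$1$2*g + C'$1$3 = C$1$3 + f*C$2$3"
    using e(3) by (simp add: mmult_nth Lmat_def)
  show T4: "C'$1$3 + Xq = 0"
    using e13 cv_p cu_q M13 Xq by algebra
  have af: "\<alpha>*f = f*(C'$1$1 - C$2$2)" using e12 cu_p cu_q Uq by algebra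
  have a: "\<alpha> = C'$1$1 - C$2$2" using af nz(1) by simp
  have bg: "\<beta>*g = g*(C'$2$2 - C$3$3)" using e23 cv_p cv_q Vq by algebra
  have b: "\<beta> = C'$2$2 - C$3$3" using bg nz(2) by simp
  have T3: "C'$3$3 = C$1$1 + 1 - \<alpha> - \<beta>" using a b trC by algebra
  have r: "C'$1$3 = -Xq" "C'$2$3 = -(\<beta>*Vq)" "C$1$2 = -(\<alpha>*Up)" "C$1$3 = -Xp"
    using T4 cv_q cu_p M13 by algebra+
  have iii: "(C' + Dm \<alpha> \<beta> Uq Vq Xq) ** Hm f g - Hm f g ** (C + Dm \<alpha> \<beta> Up Vp Xp) = Hm f g"
    unfolding mat3_eq_iff using nz
    by (simp add: mmult_nth Hm_def Dm_def r T3 field_simps)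
  have ii: "Dm \<alpha> \<beta> Uq Vq Xq ** Lmat f g 0 = Lmat f g 0 ** Dm \<alpha> \<beta> Up Vp Xp"
    unfolding Dm_def Lmat_def mat3_mult Uq Vq Xq
    by (rule mat3_cong) (simp_all add: field_simps)
  assume "\<mu> \<noteq> 0" "1 + \<mu> \<noteq> 0"
  then show "(smat (1/(1+\<mu>)) C' + smat (1/\<mu>) (Dm \<alpha> \<beta> Uq Vq Xq)) ** Lmat f g \<mu>
       - Lmat f g \<mu> ** (smat (1/(1+\<mu>)) C + smat (1/\<mu>) (Dm \<alpha> \<beta> Up Vp Xp)) = Hm f g"
    by (rule compat_abs[OF i ii iii])
qed


lemma vshift:
  assumes "vertex_fun w"
  shows "w (k+n) (l+n) (m+n) = w k l m"
proof (rule int_induct2[where P="\<lambda>n. w (k+n) (l+n) (m+n) = w k l m"])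
  show "w (k+0) (l+0) (m+0) = w k l m" by simp
next
  fix i
  have s: "w (k+i+1) (l+i+1) (m+i+1) = w (k+i) (l+i) (m+i)"
    using assms unfolding vertex_fun_def by blast
  assume "w (k+i) (l+i) (m+i) = w k l m"
  then show "w (k+(i+1)) (l+(i+1)) (m+(i+1)) = w k l m" using s by (simp add: add.assoc)
next
  fix i
  have s: "w (k+i+1) (l+i+1) (m+i+1) = w (k+i) (l+i) (m+i)"
    using assms unfolding vertex_fun_def by blast
  assume "w (k+(i+1)) (l+(i+1)) (m+(i+1)) = w k l m"
  then show "w (k+i) (l+i) (m+i) = w k l m" using s by (simp add: add.assoc)
qed

lemma vred:
  assumes "vertex_fun w"
  shows "w k l m = w (k-m) (l-m) 0"
  using vshift[OF assms, where k="k-m" and l="l-m" and m=0 and n=m] by simp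

lemma d3_eq: "d3 w k l m = d0 w (k-1) l m" by (simp add: d3_def d0_def)
lemma d5_eq: "d5 w k l m = d2 w k (l-1) m" by (simp add: d5_def d2_def)
lemma d1_eq: "d1 w k l m = d4 w k l (m-1)" by (simp add: d1_def d4_def)

lemma trPmat:
  assumes "a*b + b*c + c*d \<noteq> 0"
  shows "Pmat a b c d $1$1 + Pmat a b c d $2$2 + Pmat a b c d $3$3 = 1"
proof -
  have "Pmat a b c d $1$1 + Pmat a b c d $2$2 + Pmat a b c d $3$3 = (1/(a*b + b*c + c*d)) * (a*b + b*c + c*d)"
    by (simp add: Pmat_nth ring_distribs)
  also have "\<dots> = 1" using assms by simp
  finally show ?thesis .
qed

locale lat =
  fixes u v :: vfun and \<alpha> \<beta> :: complex
  assumes u_vert: "vertex_fun u" and v_vert: "vertex_fun v"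
    and u0: "u 0 0 0 = 0" and v0: "v 0 0 0 = 0"
    and nondeg_f: "\<forall>k l m. d0 u k l m \<noteq> 0 \<and> d2 u k l m \<noteq> 0 \<and> d4 u k l m \<noteq> 0"
    and nondeg_g: "\<forall>k l m. d0 v k l m \<noteq> 0 \<and> d2 v k l m \<noteq> 0 \<and> d4 v k l m \<noteq> 0"
    and nondeg_den: "\<forall>k l m.
          d0 u k l m * d0 v k l m + d0 v k l m * d3 u k l m + d3 u k l m * d3 v k l m \<noteq> 0 \<and>
          d2 u k l m * d2 v k l m + d2 v k l m * d5 u k l m + d5 u k l m * d5 v k l m \<noteq> 0 \<and>
          d4 u k l m * d4 v k l m + d4 v k l m * d1 u k l m + d1 u k l m * d1 v k l m \<noteq> 0"
    and tri: "triangle_eqs u v"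
    and constr_u: "\<forall>k l m. \<alpha> * u k l m =
          of_int k * (d0 u k l m * d0 v k l m * d3 u k l m) /
            (d0 u k l m * d0 v k l m + d0 v k l m * d3 u k l m + d3 u k l m * d3 v k l m)
        + of_int l * (d2 u k l m * d2 v k l m * d5 u k l m) /
            (d2 u k l m * d2 v k l m + d2 v k l m * d5 u k l m + d5 u k l m * d5 v k l m)
        + of_int m * (d4 u k l m * d4 v k l m * d1 u k l m) /
            (d4 u k l m * d4 v k l m + d4 v k l m * d1 u k l m + d1 u k l m * d1 v k l m)"
    and constr_v: "\<forall>k l m. \<beta> * v k l m =
          of_int k * (d0 v k l m * d3 u k l m * d3 v k l m) /
            (d0 u k l m * d0 v k l m + d0 v k l m * d3 u k l m + d3 u k l m * d3 v k l m)
        + of_int l * (d2 v k l m * d5 u k l m * d5 v k l m) /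
            (d2 u k l m * d2 v k l m + d2 v k l m * d5 u k l m + d5 u k l m * d5 v k l m)
        + of_int m * (d4 v k l m * d1 u k l m * d1 v k l m) /
            (d4 u k l m * d4 v k l m + d4 v k l m * d1 u k l m + d1 u k l m * d1 v k l m)"
begin

lemma u1: "u (k+1) (l+1) (m+1) = u k l m" using u_vert by (simp add: vertex_fun_def)
lemma v1: "v (k+1) (l+1) (m+1) = v k l m" using v_vert by (simp add: vertex_fun_def)

lemma nzu: "u (k+1) l m \<noteq> u k l m" "u k (l+1) m \<noteq> u k l m" "u k l (m+1) \<noteq> u k l m"
  using nondeg_f by (auto simp: d0_def d2_def d4_def)
lemma nzv: "v (k+1) l m \<noteq> v k l m" "v k (l+1) m \<noteq> v k l m" "v k l (m+1) \<noteq> v k l m"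
  using nondeg_g by (auto simp: d0_def d2_def d4_def)
lemma nzu_d: "u (k+1) (l+1) m \<noteq> u k l m" "u (k+1) l (m+1) \<noteq> u k l m" "u k (l+1) (m+1) \<noteq> u k l m"
proof -
  show "u (k+1) (l+1) m \<noteq> u k l m" using nzu(3)[of "k+1" "l+1" m] u1[of k l m] by metis
  show "u (k+1) l (m+1) \<noteq> u k l m" using nzu(2)[of "k+1" l "m+1"] u1[of k l m] by metis
  show "u k (l+1) (m+1) \<noteq> u k l m" using nzu(1)[of k "l+1" "m+1"] u1[of k l m] by metis
qed
lemma nzv_d: "v (k+1) (l+1) m \<noteq> v k l m" "v (k+1) l (m+1) \<noteq> v k l m" "v k (l+1) (m+1) \<noteq> v k l m"
proof -
  show "v (k+1) (l+1) m \<noteq> v k l m" using nzv(3)[of "k+1" "l+1" m] v1[of k l m] by metis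
  show "v (k+1) l (m+1) \<noteq> v k l m" using nzv(2)[of "k+1" l "m+1"] v1[of k l m] by metis
  show "v k (l+1) (m+1) \<noteq> v k l m" using nzv(1)[of k "l+1" "m+1"] v1[of k l m] by metis
qed

lemma triA: "trirel (u k l m) (v k l m) (u (k+1) l m) (v (k+1) l m) (u (k+1) (l+1) m) (v (k+1) (l+1) m)"
proof -
  have "tri_eq u v (k,l,m) (k+1,l,m) (k+1,l+1,m)" using tri by (simp add: triangle_eqs_def)
  then have e: "(u (k+1) l m - u k l m) / (u (k+1) (l+1) m - u (k+1) l m)
      = (v (k+1) (l+1) m - v (k+1) l m) / (v k l m - v (k+1) (l+1) m)"
    by (simp add: tri_eq_def)
  show ?thesis by (rule tri_eq_trirel[OF e]) (use nzu(2)[of "k+1" l m] nzv_d(1)[of k l m] in auto)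
qed

lemma triB: "trirel (u k l m) (v k l m) (u (k+1) l m) (v (k+1) l m) (u (k+1) l (m+1)) (v (k+1) l (m+1))"
proof -
  have "tri_eq u v (k,l,m) (k+1,l,m) (k+1,l,m+1)" using tri by (simp add: triangle_eqs_def)
  then have e: "(u (k+1) l m - u k l m) / (u (k+1) l (m+1) - u (k+1) l m)
      = (v (k+1) l (m+1) - v (k+1) l m) / (v k l m - v (k+1) l (m+1))"
    by (simp add: tri_eq_def)
  show ?thesis by (rule tri_eq_trirel[OF e]) (use nzu(3)[of "k+1" l m] nzv_d(2)[of k l m] in auto)
qed


abbreviation "L0 k l m \<mu> \<equiv> Lmat (d0 u k l m) (d0 v k l m) \<mu>"
abbreviation "L2 k l m \<mu> \<equiv> Lmat (d2 u k l m) (d2 v k l m) \<mu>"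
abbreviation "L4 k l m \<mu> \<equiv> Lmat (d4 u k l m) (d4 v k l m) \<mu>"

lemma nzd[simp]: "d0 u k l m \<noteq> 0" "d2 u k l m \<noteq> 0" "d4 u k l m \<noteq> 0"
  "d0 v k l m \<noteq> 0" "d2 v k l m \<noteq> 0" "d4 v k l m \<noteq> 0"
  using nondeg_f nondeg_g by auto

lemma triPSR02: "trirel (u k l m) (v k l m) (u k (l+1) m) (v k (l+1) m) (u (k+1) (l+1) m) (v (k+1) (l+1) m)"
proof -
  have "trirel (u k (l+1) m) (v k (l+1) m) (u (k+1) (l+1) m) (v (k+1) (l+1) m) (u k l m) (v k l m)"
    using triB[of k "l+1" m] u1[of k l m] v1[of k l m] by simp
  then show ?thesis by (metis trirel_rot)
qed

lemma triPQR24: "trirel (u k l m) (v k l m) (u k (l+1) m) (v k (l+1) m) (u k (l+1) (m+1)) (v k (l+1) (m+1))"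
proof -
  have "trirel (u k (l+1) (m+1)) (v k (l+1) (m+1)) (u k l m) (v k l m) (u k (l+1) m) (v k (l+1) m)"
    using triA[of "k-1" l m] u1[of "k-1" l m] v1[of "k-1" l m] by simp
  then show ?thesis by (metis trirel_rot)
qed

lemma triPSR24: "trirel (u k l m) (v k l m) (u k l (m+1)) (v k l (m+1)) (u k (l+1) (m+1)) (v k (l+1) (m+1))"
proof -
  have "trirel (u k (l+1) (m+1)) (v k (l+1) (m+1)) (u k l m) (v k l m) (u k l (m+1)) (v k l (m+1))"
    using triB[of "k-1" l m] u1[of "k-1" l m] v1[of "k-1" l m] by simp
  then show ?thesis by (metis trirel_rot)
qed

lemma triPSR04: "trirel (u k l m) (v k l m) (u k l (m+1)) (v k l (m+1)) (u (k+1) l (m+1)) (v (k+1) l (m+1))"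
proof -
  have "trirel (u k l (m+1)) (v k l (m+1)) (u (k+1) l (m+1)) (v (k+1) l (m+1)) (u k l m) (v k l m)"
    using triA[of k l "m+1"] u1[of k l m] v1[of k l m] by simp
  then show ?thesis by (metis trirel_rot)
qed

lemmas nzall = nzu nzv nzu_d nzv_d nzu[symmetric] nzv[symmetric] nzu_d[symmetric] nzv_d[symmetric]

lemma R02: "L2 (k+1) l m \<mu> ** L0 k l m \<mu> = L0 k (l+1) m \<mu> ** L2 k l m \<mu>"
  unfolding d0_def d2_def
  by (rule rhombus_vals[OF triA triPSR02]) (simp_all add: nzall)

lemma R04: "L4 (k+1) l m \<mu> ** L0 k l m \<mu> = L0 k l (m+1) \<mu> ** L4 k l m \<mu>"
  unfolding d0_def d4_def
  by (rule rhombus_vals[OF triB triPSR04]) (simp_all add: nzall)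

lemma R24: "L4 k (l+1) m \<mu> ** L2 k l m \<mu> = L2 k l (m+1) \<mu> ** L4 k l m \<mu>"
  unfolding d2_def d4_def
  by (rule rhombus_vals[OF triPQR24 triPSR24]) (simp_all add: nzall)

lemma tri_mono_lat: "L4 (k+1) (l+1) m \<mu> ** L2 (k+1) l m \<mu> ** L0 k l m \<mu> = mat (1+\<mu>)"
proof -
  have d: "d4 u (k+1) (l+1) m = u k l m - u (k+1) (l+1) m" "d4 v (k+1) (l+1) m = v k l m - v (k+1) (l+1) m"
    using u1 v1 by (simp_all add: d4_def)
  show ?thesis unfolding d d2_def d0_def
    by (rule tri_mono[OF triA]) (simp_all add: nzall)
qed

lemma Linv_lat:
  assumes "\<mu> \<noteq> -1"
  shows "Linv (d0 u k l m) (d0 v k l m) \<mu> ** L0 k l m \<mu> = mat 1"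
    "L0 k l m \<mu> ** Linv (d0 u k l m) (d0 v k l m) \<mu> = mat 1"
    "Linv (d2 u k l m) (d2 v k l m) \<mu> ** L2 k l m \<mu> = mat 1"
    "L2 k l m \<mu> ** Linv (d2 u k l m) (d2 v k l m) \<mu> = mat 1"
    "Linv (d4 u k l m) (d4 v k l m) \<mu> ** L4 k l m \<mu> = mat 1"
    "L4 k l m \<mu> ** Linv (d4 u k l m) (d4 v k l m) \<mu> = mat 1"
  using Linv_L[OF _ _ assms] by simp_all

lemma cancel_left:
  assumes "Li ** L = mat 1" "L ** X = L ** (Y::complex^3^3)"
  shows "X = Y"
proof -
  have "Li ** (L ** X) = Li ** (L ** Y)" using assms(2) by simp
  then show ?thesis unfolding matrix_mul_assoc assms(1) by simp
qed

end

lemma det_mat3: "det (mat3 a11 a12 a13 a21 a22 a23 a31 a32 a33) =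
  a11*a22*a33 + a12*a23*a31 + a13*a21*a32 - a11*a23*a32 - a12*a21*a33 - a13*a22*a31"
  by (simp add: det_3)

lemma det_Lmat: "f \<noteq> 0 \<Longrightarrow> g \<noteq> 0 \<Longrightarrow> det (Lmat f g \<mu>) = 1 + \<mu>"
  by (simp add: Lmat_def det_mat3)

lemma det_left_inv: "Li ** L = mat 1 \<Longrightarrow> det (Li::complex^3^3) \<noteq> 0"
  by (metis det_I det_mul mult_zero_left one_neq_zero)

lemma det_smat: "det (smat c (M::complex^3^3)) = c^3 * det M"
proof -
  have "smat c M = mat c ** M" by (simp add: mat_mm)
  then have "det (smat c M) = det (mat c :: complex^3^3) * det M" by (simp add: det_mul)
  moreover have "det (mat c :: complex^3^3) = c^3" by (simp add: mat_mat3 det_mat3 power3_eq_cube)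
  ultimately show ?thesis by simp
qed

context lat
begin

definition "dd1 = - (2*\<alpha> + \<beta>) / 3"
definition "dd2 = (\<alpha> - \<beta>) / 3"
definition "dd3 = (2*\<beta> + \<alpha>) / 3"

definition Psi0 :: "complex \<Rightarrow> complex^3^3" where
  "Psi0 x = mat3 (exp (dd1 * Ln x)) 0 0 0 (exp (dd2 * Ln x)) 0 0 0 (exp (dd3 * Ln x))"

definition "Phix x \<mu> = transp (\<lambda>i. L0 i 0 0 \<mu>) (\<lambda>i. Linv (d0 u i 0 0) (d0 v i 0 0) \<mu>) (Psi0 \<mu>) x"
definition "Phi x y \<mu> = transp (\<lambda>j. L2 x j 0 \<mu>) (\<lambda>j. Linv (d2 u x j 0) (d2 v x j 0) \<mu>) (Phix x \<mu>) y"
definition "Psi k l m \<mu> = smat ((1+\<mu>) powi m) (Phi (k-m) (l-m) \<mu>)"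

lemma Phix_step: "\<mu> \<noteq> -1 \<Longrightarrow> Phix (x+1) \<mu> = L0 x 0 0 \<mu> ** Phix x \<mu>"
  unfolding Phix_def by (rule transp_step) (simp add: Linv_lat)

lemma Phi_0: "Phi x 0 \<mu> = Phix x \<mu>" by (simp add: Phi_def)

lemma Phi_y: "\<mu> \<noteq> -1 \<Longrightarrow> Phi x (y+1) \<mu> = L2 x y 0 \<mu> ** Phi x y \<mu>"
  unfolding Phi_def by (rule transp_step) (simp add: Linv_lat)

lemma Phi_x:
  assumes mu: "\<mu> \<noteq> -1"
  shows "Phi (x+1) y \<mu> = L0 x y 0 \<mu> ** Phi x y \<mu>"
proof (rule int_induct2[where P="\<lambda>y. Phi (x+1) y \<mu> = L0 x y 0 \<mu> ** Phi x y \<mu>"])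
  show "Phi (x+1) 0 \<mu> = L0 x 0 0 \<mu> ** Phi x 0 \<mu>"
    unfolding Phi_0 by (rule Phix_step[OF mu])
next
  fix i
  assume IH: "Phi (x+1) i \<mu> = L0 x i 0 \<mu> ** Phi x i \<mu>"
  have "Phi (x+1) (i+1) \<mu> = L2 (x+1) i 0 \<mu> ** (L0 x i 0 \<mu> ** Phi x i \<mu>)"
    using Phi_y[OF mu, of "x+1" i] IH by simp
  also have "\<dots> = (L2 (x+1) i 0 \<mu> ** L0 x i 0 \<mu>) ** Phi x i \<mu>" by (simp add: matrix_mul_assoc)
  also have "\<dots> = (L0 x (i+1) 0 \<mu> ** L2 x i 0 \<mu>) ** Phi x i \<mu>" by (simp add: R02)
  also have "\<dots> = L0 x (i+1) 0 \<mu> ** Phi x (i+1) \<mu>" using Phi_y[OF mu, of x i] by (simp add: matrix_mul_assoc)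
  finally show "Phi (x+1) (i+1) \<mu> = L0 x (i+1) 0 \<mu> ** Phi x (i+1) \<mu>" .
next
  fix i
  assume IH: "Phi (x+1) (i+1) \<mu> = L0 x (i+1) 0 \<mu> ** Phi x (i+1) \<mu>"
  have "L2 (x+1) i 0 \<mu> ** Phi (x+1) i \<mu> = Phi (x+1) (i+1) \<mu>"
    using Phi_y[OF mu, of "x+1" i] by simp
  also have "\<dots> = L0 x (i+1) 0 \<mu> ** (L2 x i 0 \<mu> ** Phi x i \<mu>)"
    using IH Phi_y[OF mu, of x i] by simp
  also have "\<dots> = (L0 x (i+1) 0 \<mu> ** L2 x i 0 \<mu>) ** Phi x i \<mu>" by (simp add: matrix_mul_assoc)
  also have "\<dots> = (L2 (x+1) i 0 \<mu> ** L0 x i 0 \<mu>) ** Phi x i \<mu>" by (simp add: R02)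
  also have "\<dots> = L2 (x+1) i 0 \<mu> ** (L0 x i 0 \<mu> ** Phi x i \<mu>)" by (simp add: matrix_mul_assoc)
  finally show "Phi (x+1) i \<mu> = L0 x i 0 \<mu> ** Phi x i \<mu>"
    by (rule cancel_left[OF Linv_lat(3)[OF mu]])
qed

lemma Phi_diag:
  assumes mu: "\<mu> \<noteq> -1"
  shows "L4 x y 0 \<mu> ** Phi x y \<mu> = smat (1+\<mu>) (Phi (x-1) (y-1) \<mu>)"
proof -
  have "Phi x y \<mu> = L2 x (y-1) 0 \<mu> ** Phi x (y-1) \<mu>" using Phi_y[OF mu, of x "y-1"] by simp
  also have "\<dots> = L2 x (y-1) 0 \<mu> ** (L0 (x-1) (y-1) 0 \<mu> ** Phi (x-1) (y-1) \<mu>)"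
    using Phi_x[OF mu, of "x-1" "y-1"] by simp
  finally have "L4 x y 0 \<mu> ** Phi x y \<mu> =
      (L4 x y 0 \<mu> ** L2 x (y-1) 0 \<mu> ** L0 (x-1) (y-1) 0 \<mu>) ** Phi (x-1) (y-1) \<mu>"
    by (simp add: matrix_mul_assoc)
  also have "\<dots> = mat (1+\<mu>) ** Phi (x-1) (y-1) \<mu>"
    using tri_mono_lat[of "x-1" "y-1" 0 \<mu>] by simp
  finally show ?thesis by (simp add: mat_mm)
qed

lemma u_red: "u k l m = u (k-m) (l-m) 0" by (rule vred[OF u_vert])
lemma v_red: "v k l m = v (k-m) (l-m) 0" by (rule vred[OF v_vert])

lemma d_red:
  "d0 u k l m = d0 u (k-m) (l-m) 0" "d0 v k l m = d0 v (k-m) (l-m) 0"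
  "d2 u k l m = d2 u (k-m) (l-m) 0" "d2 v k l m = d2 v (k-m) (l-m) 0"
  "d4 u k l m = d4 u (k-m) (l-m) 0" "d4 v k l m = d4 v (k-m) (l-m) 0"
proof -
  have a: "u (k+1) l m = u (k-m+1) (l-m) 0" "u k (l+1) m = u (k-m) (l-m+1) 0"
     "u k l (m+1) = u (k-m) (l-m) 1" "u k l m = u (k-m) (l-m) 0"
    using u_red[of "k+1" l m] u_red[of k "l+1" m] u_red[of k l "m+1"] u_red[of "k-m" "l-m" 1] u_red[of k l m]
    by (simp_all add: algebra_simps)
  have b: "v (k+1) l m = v (k-m+1) (l-m) 0" "v k (l+1) m = v (k-m) (l-m+1) 0"
     "v k l (m+1) = v (k-m) (l-m) 1" "v k l m = v (k-m) (l-m) 0"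
    using v_red[of "k+1" l m] v_red[of k "l+1" m] v_red[of k l "m+1"] v_red[of "k-m" "l-m" 1] v_red[of k l m]
    by (simp_all add: algebra_simps)
  show "d0 u k l m = d0 u (k-m) (l-m) 0" "d0 v k l m = d0 v (k-m) (l-m) 0"
  "d2 u k l m = d2 u (k-m) (l-m) 0" "d2 v k l m = d2 v (k-m) (l-m) 0"
  "d4 u k l m = d4 u (k-m) (l-m) 0" "d4 v k l m = d4 v (k-m) (l-m) 0"
    using a b by (simp_all add: d0_def d2_def d4_def)
qed

lemma Psi_0:
  assumes mu: "\<mu> \<noteq> -1"
  shows "Psi (k+1) l m \<mu> = L0 k l m \<mu> ** Psi k l m \<mu>"
proof -
  have e: "k + 1 - m = (k-m) + 1" by simp
  show ?thesis unfolding Psi_def smat_mm_r d_red(1,2)[of k l m] e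
    using Phi_x[OF mu, of "k-m" "l-m"] by simp
qed

lemma Psi_2:
  assumes mu: "\<mu> \<noteq> -1"
  shows "Psi k (l+1) m \<mu> = L2 k l m \<mu> ** Psi k l m \<mu>"
proof -
  have e: "l + 1 - m = (l-m) + 1" by simp
  show ?thesis unfolding Psi_def smat_mm_r d_red(3,4)[of k l m] e
    using Phi_y[OF mu, of "k-m" "l-m"] by simp
qed

lemma Psi_4:
  assumes mu: "\<mu> \<noteq> -1"
  shows "Psi k l (m+1) \<mu> = L4 k l m \<mu> ** Psi k l m \<mu>"
proof -
  have nz: "1 + \<mu> \<noteq> 0" using mu by (metis add.commute add_eq_0_iff2)
  have p: "(1+\<mu>) powi (m+1) = (1+\<mu>) powi m * (1+\<mu>)" using nz by (simp add: power_int_add_1)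
  have "Psi k l (m+1) \<mu> = smat ((1+\<mu>) powi m) (smat (1+\<mu>) (Phi (k-m-1) (l-m-1) \<mu>))"
    unfolding Psi_def p smat_smat by (simp add: algebra_simps)
  also have "\<dots> = smat ((1+\<mu>) powi m) (L4 (k-m) (l-m) 0 \<mu> ** Phi (k-m) (l-m) \<mu>)"
    using Phi_diag[OF mu, of "k-m" "l-m"] by simp
  also have "\<dots> = L4 k l m \<mu> ** Psi k l m \<mu>"
    unfolding Psi_def smat_mm_r d_red(5,6)[of k l m] ..
  finally show ?thesis .
qed

lemma Psi_shift:
  assumes mu: "\<mu> \<noteq> -1"
  shows "Psi (k+n) (l+n) (m+n) \<mu> = smat ((1 + \<mu>) powi n) (Psi k l m \<mu>)"
proof -
  have nz: "1 + \<mu> \<noteq> 0" using mu by (metis add.commute add_eq_0_iff2)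
  have p: "(1+\<mu>) powi (m+n) = (1+\<mu>) powi n * (1+\<mu>) powi m" using nz by (simp add: power_int_add)
  show ?thesis unfolding Psi_def p smat_smat by simp
qed

lemma det_Psi0: "det (Psi0 x) \<noteq> 0"
  by (simp add: Psi0_def det_mat3)

lemma det_Psi:
  assumes mu: "\<mu> \<noteq> -1"
  shows "det (Psi k l m \<mu>) \<noteq> 0"
proof -
  have nz: "1 + \<mu> \<noteq> 0" using mu by (metis add.commute add_eq_0_iff2)
  have dL: "\<And>f g. f \<noteq> 0 \<Longrightarrow> g \<noteq> 0 \<Longrightarrow> det (Lmat f g \<mu>) \<noteq> 0" using nz by (simp add: det_Lmat)
  have dLi: "\<And>f g. f \<noteq> 0 \<Longrightarrow> g \<noteq> 0 \<Longrightarrow> det (Linv f g \<mu>) \<noteq> 0"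
    using Linv_L[OF _ _ mu] det_left_inv by blast
  have "det (Phix x \<mu>) \<noteq> 0" for x
    unfolding Phix_def by (rule det_transp) (simp_all add: dL dLi det_Psi0)
  then have "det (Phi x y \<mu>) \<noteq> 0" for x y
    unfolding Phi_def by (intro det_transp) (simp_all add: dL dLi)
  then show ?thesis unfolding Psi_def det_smat using nz by (simp add: power_int_not_zero)
qed

end

definition pot :: "(int \<Rightarrow> complex) \<Rightarrow> int \<Rightarrow> complex" where
  "pot w n = (if 0 \<le> n then (\<Sum>i<nat n. w (int i)) else - (\<Sum>i<nat (-n). w (- int i - 1)))"

lemma pot_0[simp]: "pot w 0 = 0" by (simp add: pot_def)

lemma pot_step: "pot w (n+1) = pot w n + w n"
proof (cases "0 \<le> n")
  case True
  then have "nat (n+1) = Suc (nat n)" by simp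
  then show ?thesis using True by (simp add: pot_def)
next
  case False
  define m where "m = nat (-n-1)"
  have nm: "nat (-n) = Suc m" "n = - int m - 1" using False by (auto simp: m_def)
  have t1: "pot w (n+1) = - (\<Sum>i<m. w (- int i - 1))"
  proof (cases "n = -1")
    case True then show ?thesis by (simp add: pot_def m_def)
  next
    case False
    then have "\<not> 0 \<le> n+1" "nat (-(n+1)) = m" using \<open>\<not> 0 \<le> n\<close> by (auto simp: m_def)
    then show ?thesis by (simp add: pot_def)
  qed
  have t2: "pot w n = - (\<Sum>i<m. w (- int i - 1)) - w n"
    using False nm(1) by (simp add: pot_def nm(2)[symmetric])
  show ?thesis unfolding t1 t2 by simp
qed

lemma closed_tri: "trirel u1 v1 u2 v2 u3 v3 \<Longrightarrow> v1*(u2-u1) + v2*(u3-u2) + v3*(u1-u3) = (0::complex)"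
  unfolding trirel_def by algebra

context lat
begin

definition "bpot x y = pot (\<lambda>i. v i 0 0 * (u (i+1) 0 0 - u i 0 0)) x + pot (\<lambda>j. v x j 0 * (u x (j+1) 0 - u x j 0)) y"

lemma bpot_y: "bpot x (y+1) = bpot x y + v x y 0 * (u x (y+1) 0 - u x y 0)"
  by (simp add: bpot_def pot_step)

lemma bpot_x: "bpot (x+1) y = bpot x y + v x y 0 * (u (x+1) y 0 - u x y 0)"
proof (rule int_induct2[where P="\<lambda>y. bpot (x+1) y = bpot x y + v x y 0 * (u (x+1) y 0 - u x y 0)"])
  show "bpot (x+1) 0 = bpot x 0 + v x 0 0 * (u (x+1) 0 0 - u x 0 0)"
    by (simp add: bpot_def pot_step)
next
  fix i
  have c1: "v x i 0 * (u (x+1) i 0 - u x i 0) + v (x+1) i 0 * (u (x+1) (i+1) 0 - u (x+1) i 0)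
      + v (x+1) (i+1) 0 * (u x i 0 - u (x+1) (i+1) 0) = 0"
    by (rule closed_tri[OF triA])
  have c2: "v x i 0 * (u x (i+1) 0 - u x i 0) + v x (i+1) 0 * (u (x+1) (i+1) 0 - u x (i+1) 0)
      + v (x+1) (i+1) 0 * (u x i 0 - u (x+1) (i+1) 0) = 0"
    by (rule closed_tri[OF triPSR02])
  have y1: "bpot (x+1) (i+1) = bpot (x+1) i + v (x+1) i 0 * (u (x+1) (i+1) 0 - u (x+1) i 0)"
    "bpot x (i+1) = bpot x i + v x i 0 * (u x (i+1) 0 - u x i 0)" by (rule bpot_y)+
  {
    assume "bpot (x+1) i = bpot x i + v x i 0 * (u (x+1) i 0 - u x i 0)"
    then show "bpot (x+1) (i+1) = bpot x (i+1) + v x (i+1) 0 * (u (x+1) (i+1) 0 - u x (i+1) 0)"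
      using c1 c2 y1 by algebra
  }
  {
    assume "bpot (x+1) (i+1) = bpot x (i+1) + v x (i+1) 0 * (u (x+1) (i+1) 0 - u x (i+1) 0)"
    then show "bpot (x+1) i = bpot x i + v x i 0 * (u (x+1) i 0 - u x i 0)"
      using c1 c2 y1 by algebra
  }
qed

definition "aa k l m = bpot (k-m) (l-m)"
definition "ab k l m = u k l m * v k l m - aa k l m"

lemma aa_vert: "vertex_fun aa" unfolding vertex_fun_def aa_def by simp
lemma ab_vert: "vertex_fun ab" unfolding vertex_fun_def ab_def aa_def using u1 v1 by simp

lemma aa0: "aa 0 0 0 = 0" by (simp add: aa_def bpot_def)
lemma ab0: "ab 0 0 0 = 0" by (simp add: ab_def aa0 u0 v0)

lemma d0_aa: "d0 aa k l m = v k l m * d0 u k l m"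
proof -
  have e: "k + 1 - m = (k-m) + 1" by simp
  show ?thesis unfolding d_red(1)[of k l m] v_red[of k l m] unfolding d0_def aa_def e bpot_x by simp
qed

lemma d2_aa: "d2 aa k l m = v k l m * d2 u k l m"
proof -
  have e: "l + 1 - m = (l-m) + 1" by simp
  show ?thesis unfolding d_red(3)[of k l m] v_red[of k l m] unfolding d2_def aa_def e bpot_y by simp
qed

lemma d4_aa: "d4 aa k l m = v k l m * d4 u k l m"
proof -
  define x where "x = k - m"
  define y where "y = l - m"
  have e: "k - (m+1) = x - 1" "l - (m+1) = y - 1" "k - m = x" "l - m = y" by (simp_all add: x_def y_def)
  have c: "v (x-1) (y-1) 0 * (u x (y-1) 0 - u (x-1) (y-1) 0) + v x (y-1) 0 * (u x y 0 - u x (y-1) 0)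
      + v x y 0 * (u (x-1) (y-1) 0 - u x y 0) = 0"
    using closed_tri[OF triA[of "x-1" "y-1" 0]] by simp
  have bx: "bpot x (y-1) = bpot (x-1) (y-1) + v (x-1) (y-1) 0 * (u x (y-1) 0 - u (x-1) (y-1) 0)"
    using bpot_x[of "x-1" "y-1"] by simp
  have by': "bpot x y = bpot x (y-1) + v x (y-1) 0 * (u x y 0 - u x (y-1) 0)"
    using bpot_y[of x "y-1"] by simp
  have ur: "u x y 1 = u (x-1) (y-1) 0" using u_red[of x y 1] by simp
  have r: "u k l (m+1) = u (x-1) (y-1) 0" "u k l m = u x y 0" "v k l m = v x y 0"
    using u_red[of k l "m+1"] u_red[of k l m] v_red[of k l m] by (simp_all add: x_def y_def algebra_simps)
  have "d4 aa k l m = bpot (x-1) (y-1) - bpot x y" unfolding d4_def aa_def e ..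
  also have "\<dots> = v x y 0 * (u (x-1) (y-1) 0 - u x y 0)" using c bx by' by algebra
  also have "\<dots> = v k l m * d4 u k l m"
    unfolding d4_def r ..
  finally show ?thesis .
qed

lemma d0_ab: "d0 ab k l m = u (k+1) l m * d0 v k l m"
  using d0_aa[of k l m] unfolding d0_def ab_def by algebra
lemma d2_ab: "d2 ab k l m = u k (l+1) m * d2 v k l m"
  using d2_aa[of k l m] unfolding d2_def ab_def by algebra
lemma d4_ab: "d4 ab k l m = u k l (m+1) * d4 v k l m"
  using d4_aa[of k l m] unfolding d4_def ab_def by algebra

end

context lat
begin

lemma den_facts:
  "d0 u k l m * d0 v k l m + d0 v k l m * d3 u k l m + d3 u k l m * d3 v k l m \<noteq> 0"
  "d2 u k l m * d2 v k l m + d2 v k l m * d5 u k l m + d5 u k l m * d5 v k l m \<noteq> 0"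
  "d4 u k l m * d4 v k l m + d4 v k l m * d1 u k l m + d1 u k l m * d1 v k l m \<noteq> 0"
  using nondeg_den by auto

lemma CL0: "Cmat u v (k+1) l m ** L0 k l m (-1) = L0 k l m (-1) ** Cmat u v k l m"
proof -
  have a: "Pmat (d0 u (k+1) l m) (d0 v (k+1) l m) (d3 u (k+1) l m) (d3 v (k+1) l m) ** L0 k l m (-1) = 0"
    using Pmat_L_zero[of "d0 u k l m" "d0 v k l m"] by (simp add: d3_eq)
  have b: "L0 k l m (-1) ** Pmat (d0 u k l m) (d0 v k l m) (d3 u k l m) (d3 v k l m) = 0"
    by (rule L_Pmat_zero) simp_all
  have c: "Pmat (d2 u (k+1) l m) (d2 v (k+1) l m) (d5 u (k+1) l m) (d5 v (k+1) l m) ** L0 k l m (-1)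
      = L0 k l m (-1) ** Pmat (d2 u k l m) (d2 v k l m) (d5 u k l m) (d5 v k l m)"
    using den_facts(2)[of k l m] den_facts(2)[of "k+1" l m] unfolding d5_eq
    by (intro intertwine[OF R02[of k l m "-1"] R02[of k "l-1" m "-1", simplified, symmetric]]) simp_all
  have d: "Pmat (d4 u (k+1) l m) (d4 v (k+1) l m) (d1 u (k+1) l m) (d1 v (k+1) l m) ** L0 k l m (-1)
      = L0 k l m (-1) ** Pmat (d4 u k l m) (d4 v k l m) (d1 u k l m) (d1 v k l m)"
    using den_facts(3)[of k l m] den_facts(3)[of "k+1" l m] unfolding d1_eq
    by (intro intertwine[OF R04[of k l m "-1"] R04[of k l "m-1" "-1", simplified, symmetric]]) simp_all
  show ?thesis unfolding Cmat_def mm_add_r mm_add_l smat_mm_l smat_mm_r a b c d smat_zero by simp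
qed

lemma CL2: "Cmat u v k (l+1) m ** L2 k l m (-1) = L2 k l m (-1) ** Cmat u v k l m"
proof -
  have a: "Pmat (d2 u k (l+1) m) (d2 v k (l+1) m) (d5 u k (l+1) m) (d5 v k (l+1) m) ** L2 k l m (-1) = 0"
    using Pmat_L_zero[of "d2 u k l m" "d2 v k l m"] by (simp add: d5_eq)
  have b: "L2 k l m (-1) ** Pmat (d2 u k l m) (d2 v k l m) (d5 u k l m) (d5 v k l m) = 0"
    by (rule L_Pmat_zero) simp_all
  have c: "Pmat (d0 u k (l+1) m) (d0 v k (l+1) m) (d3 u k (l+1) m) (d3 v k (l+1) m) ** L2 k l m (-1)
      = L2 k l m (-1) ** Pmat (d0 u k l m) (d0 v k l m) (d3 u k l m) (d3 v k l m)"
    using den_facts(1)[of k l m] den_facts(1)[of k "l+1" m] unfolding d3_eq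
    by (intro intertwine[OF R02[of k l m "-1", symmetric] R02[of "k-1" l m "-1", simplified]]) simp_all
  have d: "Pmat (d4 u k (l+1) m) (d4 v k (l+1) m) (d1 u k (l+1) m) (d1 v k (l+1) m) ** L2 k l m (-1)
      = L2 k l m (-1) ** Pmat (d4 u k l m) (d4 v k l m) (d1 u k l m) (d1 v k l m)"
    using den_facts(3)[of k l m] den_facts(3)[of k "l+1" m] unfolding d1_eq
    by (intro intertwine[OF R24[of k l m "-1"] R24[of k l "m-1" "-1", simplified, symmetric]]) simp_all
  show ?thesis unfolding Cmat_def mm_add_r mm_add_l smat_mm_l smat_mm_r a b c d smat_zero by simp
qed

lemma CL4: "Cmat u v k l (m+1) ** L4 k l m (-1) = L4 k l m (-1) ** Cmat u v k l m"
proof -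
  have a: "Pmat (d4 u k l (m+1)) (d4 v k l (m+1)) (d1 u k l (m+1)) (d1 v k l (m+1)) ** L4 k l m (-1) = 0"
    using Pmat_L_zero[of "d4 u k l m" "d4 v k l m"] by (simp add: d1_eq)
  have b: "L4 k l m (-1) ** Pmat (d4 u k l m) (d4 v k l m) (d1 u k l m) (d1 v k l m) = 0"
    by (rule L_Pmat_zero) simp_all
  have c: "Pmat (d0 u k l (m+1)) (d0 v k l (m+1)) (d3 u k l (m+1)) (d3 v k l (m+1)) ** L4 k l m (-1)
      = L4 k l m (-1) ** Pmat (d0 u k l m) (d0 v k l m) (d3 u k l m) (d3 v k l m)"
    using den_facts(1)[of k l m] den_facts(1)[of k l "m+1"] unfolding d3_eq
    by (intro intertwine[OF R04[of k l m "-1", symmetric] R04[of "k-1" l m "-1", simplified]]) simp_all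
  have d: "Pmat (d2 u k l (m+1)) (d2 v k l (m+1)) (d5 u k l (m+1)) (d5 v k l (m+1)) ** L4 k l m (-1)
      = L4 k l m (-1) ** Pmat (d2 u k l m) (d2 v k l m) (d5 u k l m) (d5 v k l m)"
    using den_facts(2)[of k l m] den_facts(2)[of k l "m+1"] unfolding d5_eq
    by (intro intertwine[OF R24[of k l m "-1", symmetric] R24[of k "l-1" m "-1", simplified]]) simp_all
  show ?thesis unfolding Cmat_def mm_add_r mm_add_l smat_mm_l smat_mm_r a b c d smat_zero by simp
qed

lemma trC: "Cmat u v k l m $1$1 + Cmat u v k l m $2$2 + Cmat u v k l m $3$3 = of_int k + of_int l + of_int m"
proof -
  let ?P0 = "Pmat (d0 u k l m) (d0 v k l m) (d3 u k l m) (d3 v k l m)"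
  let ?P2 = "Pmat (d2 u k l m) (d2 v k l m) (d5 u k l m) (d5 v k l m)"
  let ?P4 = "Pmat (d4 u k l m) (d4 v k l m) (d1 u k l m) (d1 v k l m)"
  have "Cmat u v k l m $1$1 + Cmat u v k l m $2$2 + Cmat u v k l m $3$3 =
     of_int k * (?P0$1$1 + ?P0$2$2 + ?P0$3$3) + of_int l * (?P2$1$1 + ?P2$2$2 + ?P2$3$3)
     + of_int m * (?P4$1$1 + ?P4$2$2 + ?P4$3$3)"
    by (simp add: Cmat_def algebra_simps)
  also have "\<dots> = of_int k + of_int l + of_int m"
    using trPmat[OF den_facts(1)] trPmat[OF den_facts(2)] trPmat[OF den_facts(3)] by simp
  finally show ?thesis .
qed

lemma C12: "\<alpha> * u k l m + Cmat u v k l m $1$2 = 0"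
  using constr_u[rule_format, of k l m] by (simp add: Cmat_def Pmat_nth)

lemma C23: "\<beta> * v k l m + Cmat u v k l m $2$3 = 0"
  using constr_v[rule_format, of k l m] by (simp add: Cmat_def Pmat_nth)

end

lemma ode_fwd:
  assumes P: "mderiv P (A ** P \<mu>) \<mu>" and S: "open S" "\<mu> \<in> S"
    and Q: "\<And>x. x \<in> S \<Longrightarrow> Q x = Lf x ** P x"
    and dL: "mderiv Lf H \<mu>" and c: "A' ** Lf \<mu> - Lf \<mu> ** A = H"
  shows "mderiv Q (A' ** Q \<mu>) \<mu>"
proof -
  have "mderiv (\<lambda>x. Lf x ** P x) (H ** P \<mu> + Lf \<mu> ** (A ** P \<mu>)) \<mu>"
    by (rule mderiv_mult[OF dL P])
  then have d: "mderiv Q (H ** P \<mu> + Lf \<mu> ** (A ** P \<mu>)) \<mu>"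
    by (rule mderiv_transform[OF _ S]) (simp add: Q)
  have e: "A' ** Lf \<mu> = H + Lf \<mu> ** A"
  proof -
    have "A' ** Lf \<mu> = (A' ** Lf \<mu> - Lf \<mu> ** A) + Lf \<mu> ** A" by simp
    then show ?thesis unfolding c .
  qed
  have "H ** P \<mu> + Lf \<mu> ** (A ** P \<mu>) = A' ** Q \<mu>"
    unfolding Q[OF S(2)] matrix_mul_assoc e mm_add_r ..
  then show ?thesis by (rule mderiv_cong[OF d])
qed

lemma ode_bwd:
  assumes Qd: "mderiv Q (A' ** Q \<mu>) \<mu>" and S: "open S" "\<mu> \<in> S"
    and P: "\<And>x. x \<in> S \<Longrightarrow> P x = Li x ** Q x"
    and dLi: "mderiv Li (-(Li \<mu> ** H ** Li \<mu>)) \<mu>"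
    and c: "A' ** Lm - Lm ** A = H" and inv1: "Li \<mu> ** Lm = mat 1" and inv2: "Lm ** Li \<mu> = mat 1"
  shows "mderiv P (A ** P \<mu>) \<mu>"
proof -
  have "mderiv (\<lambda>x. Li x ** Q x) (-(Li \<mu> ** H ** Li \<mu>) ** Q \<mu> + Li \<mu> ** (A' ** Q \<mu>)) \<mu>"
    by (rule mderiv_mult[OF dLi Qd])
  then have d: "mderiv P (-(Li \<mu> ** H ** Li \<mu>) ** Q \<mu> + Li \<mu> ** (A' ** Q \<mu>)) \<mu>"
    by (rule mderiv_transform[OF _ S]) (simp add: P)
  have e: "A' ** Lm = H + Lm ** A"
  proof -
    have "A' ** Lm = (A' ** Lm - Lm ** A) + Lm ** A" by simp
    then show ?thesis unfolding c .
  qed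
  have k: "Li \<mu> ** A' = Li \<mu> ** H ** Li \<mu> + A ** Li \<mu>"
  proof -
    have "Li \<mu> ** A' = Li \<mu> ** A' ** (Lm ** Li \<mu>)" by (simp add: inv2)
    also have "\<dots> = Li \<mu> ** (A' ** Lm) ** Li \<mu>" by (simp add: matrix_mul_assoc)
    also have "\<dots> = Li \<mu> ** (H + Lm ** A) ** Li \<mu>" by (simp add: e)
    also have "\<dots> = Li \<mu> ** H ** Li \<mu> + (Li \<mu> ** Lm) ** A ** Li \<mu>"
      by (simp add: mm_add_l mm_add_r matrix_mul_assoc)
    also have "\<dots> = Li \<mu> ** H ** Li \<mu> + A ** Li \<mu>" by (simp add: inv1)
    finally show ?thesis .
  qed
  have "-(Li \<mu> ** H ** Li \<mu>) ** Q \<mu> + Li \<mu> ** (A' ** Q \<mu>) = A ** P \<mu>"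
  proof -
    have "Li \<mu> ** (A' ** Q \<mu>) = (Li \<mu> ** H ** Li \<mu>) ** Q \<mu> + (A ** Li \<mu>) ** Q \<mu>"
      unfolding matrix_mul_assoc k mm_add_r ..
    then show ?thesis unfolding P[OF S(2)] mm_neg_l by (simp add: matrix_mul_assoc)
  qed
  then show ?thesis by (rule mderiv_cong[OF d])
qed

definition Udom :: "complex set" where "Udom = ball 2 1"

lemma Udom_facts: "open Udom" "connected Udom" "Udom \<noteq> {}" "0 \<notin> Udom" "-1 \<notin> Udom"
proof -
  show "open Udom" by (simp add: Udom_def)
  show "connected Udom" by (simp add: Udom_def)
  show "Udom \<noteq> {}" by (simp add: Udom_def)
  show "0 \<notin> Udom" by (simp add: Udom_def dist_norm)
  show "-1 \<notin> Udom" by (simp add: Udom_def dist_norm)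
qed

lemma Udom_Re: "\<mu> \<in> Udom \<Longrightarrow> Re \<mu> > 1"
proof -
  assume "\<mu> \<in> Udom"
  then have "norm (2 - \<mu>) < 1" by (simp add: Udom_def dist_norm)
  moreover have "\<bar>Re (2 - \<mu>)\<bar> \<le> norm (2 - \<mu>)" by (rule abs_Re_le_cmod)
  ultimately show "Re \<mu> > 1" by simp
qed

lemma Udom_ne: "\<mu> \<in> Udom \<Longrightarrow> \<mu> \<noteq> 0 \<and> \<mu> \<noteq> -1 \<and> 1 + \<mu> \<noteq> 0 \<and> \<mu> \<notin> \<real>\<^sub>\<le>\<^sub>0"
proof -
  assume a: "\<mu> \<in> Udom"
  have r: "Re (1 + \<mu>) > 0" using Udom_Re[OF a] by simp
  have "1 + \<mu> \<noteq> 0"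
  proof
    assume "1 + \<mu> = 0"
    then have "Re (1 + \<mu>) = 0" by simp
    with r show False by simp
  qed
  then show ?thesis using Udom_Re[OF a] by (auto simp: complex_nonpos_Reals_iff)
qed

context lat
begin

definition "Xf k l m = \<beta> * aa k l m - \<alpha> * ab k l m"

lemma Xf0: "Xf (k+1) l m = Xf k l m + \<beta> * v k l m * d0 u k l m - \<alpha> * u (k+1) l m * d0 v k l m"
  using d0_aa[of k l m] d0_ab[of k l m] unfolding d0_def Xf_def by algebra
lemma Xf2: "Xf k (l+1) m = Xf k l m + \<beta> * v k l m * d2 u k l m - \<alpha> * u k (l+1) m * d2 v k l m"
  using d2_aa[of k l m] d2_ab[of k l m] unfolding d2_def Xf_def by algebra
lemma Xf4: "Xf k l (m+1) = Xf k l m + \<beta> * v k l m * d4 u k l m - \<alpha> * u k l (m+1) * d4 v k l m"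
  using d4_aa[of k l m] d4_ab[of k l m] unfolding d4_def Xf_def by algebra

lemma M13_0: "Cmat u v (k+1) l m $1$3 + Xf (k+1) l m = Cmat u v k l m $1$3 + Xf k l m"
  by (rule edge_M13[OF CL0 C12 C23 Xf0])
lemma M13_2: "Cmat u v k (l+1) m $1$3 + Xf k (l+1) m = Cmat u v k l m $1$3 + Xf k l m"
  by (rule edge_M13[OF CL2 C12 C23 Xf2])
lemma M13_4: "Cmat u v k l (m+1) $1$3 + Xf k l (m+1) = Cmat u v k l m $1$3 + Xf k l m"
  by (rule edge_M13[OF CL4 C12 C23 Xf4])

lemma M13_zero: "Cmat u v k l m $1$3 + Xf k l m = 0"
proof -
  have b: "Cmat u v 0 0 0 $1$3 + Xf 0 0 0 = 0"
    by (simp add: Cmat_def Xf_def aa0 ab0)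
  have s0: "Cmat u v k 0 0 $1$3 + Xf k 0 0 = 0" for k
    by (rule int_induct2[where P="\<lambda>k. Cmat u v k 0 0 $1$3 + Xf k 0 0 = 0"])
       (use b M13_0 in auto)
  have s2: "Cmat u v k l 0 $1$3 + Xf k l 0 = 0" for k l
    by (rule int_induct2[where P="\<lambda>l. Cmat u v k l 0 $1$3 + Xf k l 0 = 0"])
       (use s0 M13_2 in auto)
  show ?thesis
    by (rule int_induct2[where P="\<lambda>m. Cmat u v k l m $1$3 + Xf k l m = 0"])
       (use s2 M13_4 in auto)
qed

lemma Amat_eq: "Amat \<alpha> \<beta> u v aa ab k l m \<mu> =
   smat (1/(1+\<mu>)) (Cmat u v k l m) + smat (1/\<mu>) (Dm \<alpha> \<beta> (u k l m) (v k l m) (Xf k l m))"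
  by (simp add: Amat_def Dmat_Dm Xf_def)

lemma compat0: "\<mu> \<noteq> 0 \<Longrightarrow> 1 + \<mu> \<noteq> 0 \<Longrightarrow>
  Amat \<alpha> \<beta> u v aa ab (k+1) l m \<mu> ** L0 k l m \<mu> - L0 k l m \<mu> ** Amat \<alpha> \<beta> u v aa ab k l m \<mu>
    = Hm (d0 u k l m) (d0 v k l m)"
  unfolding Amat_eq
  by (rule edge_lemma(2)[OF CL0 _ C12 C12 C23 C23 _ _ Xf0 M13_zero nzd(1) nzd(4)])
     (simp_all add: trC d0_def)

lemma compat2: "\<mu> \<noteq> 0 \<Longrightarrow> 1 + \<mu> \<noteq> 0 \<Longrightarrow>
  Amat \<alpha> \<beta> u v aa ab k (l+1) m \<mu> ** L2 k l m \<mu> - L2 k l m \<mu> ** Amat \<alpha> \<beta> u v aa ab k l m \<mu>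
    = Hm (d2 u k l m) (d2 v k l m)"
  unfolding Amat_eq
  by (rule edge_lemma(2)[OF CL2 _ C12 C12 C23 C23 _ _ Xf2 M13_zero nzd(2) nzd(5)])
     (simp_all add: trC d2_def)

lemma compat4: "\<mu> \<noteq> 0 \<Longrightarrow> 1 + \<mu> \<noteq> 0 \<Longrightarrow>
  Amat \<alpha> \<beta> u v aa ab k l (m+1) \<mu> ** L4 k l m \<mu> - L4 k l m \<mu> ** Amat \<alpha> \<beta> u v aa ab k l m \<mu>
    = Hm (d4 u k l m) (d4 v k l m)"
  unfolding Amat_eq
  by (rule edge_lemma(2)[OF CL4 _ C12 C12 C23 C23 _ _ Xf4 M13_zero nzd(3) nzd(6)])
     (simp_all add: trC d4_def)

end

context lat
begin

lemma Psi_00: "Psi 0 0 0 = Psi0"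
  by (rule ext) (simp add: Psi_def Phi_def Phix_def smat_1)

lemma deriv_expLn:
  assumes "\<mu> \<notin> \<real>\<^sub>\<le>\<^sub>0"
  shows "((\<lambda>x. exp (d * Ln x)) has_field_derivative d * exp (d * Ln \<mu>) / \<mu>) (at \<mu>)"
proof -
  have "((\<lambda>x. exp (d * Ln x)) has_field_derivative exp (d * Ln \<mu>) * (d * inverse \<mu>)) (at \<mu>)"
    by (rule DERIV_chain2[OF DERIV_exp DERIV_cmult[OF has_field_derivative_Ln[OF assms]]])
  then show ?thesis by (rule DERIV_cong) (simp add: divide_inverse)
qed

lemma mderiv_Psi0:
  assumes U: "\<mu> \<in> Udom"
  shows "mderiv Psi0 (Amat \<alpha> \<beta> u v aa ab 0 0 0 \<mu> ** Psi0 \<mu>) \<mu>"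
proof -
  have nr: "\<mu> \<notin> \<real>\<^sub>\<le>\<^sub>0" using Udom_ne[OF U] by simp
  have d: "mderiv Psi0 (mat3 (dd1 * exp (dd1 * Ln \<mu>) / \<mu>) 0 0 0 (dd2 * exp (dd2 * Ln \<mu>) / \<mu>) 0 0 0
       (dd3 * exp (dd3 * Ln \<mu>) / \<mu>)) \<mu>"
    unfolding mderiv_def forall_3 Psi0_def mat3_nth by (simp add: deriv_expLn[OF nr])
  have C0: "Cmat u v 0 0 0 = 0" by (simp add: Cmat_def smat_0)
  have A0: "Amat \<alpha> \<beta> u v aa ab 0 0 0 \<mu> = smat (1/\<mu>) (mat3 dd1 0 0 0 dd2 0 0 0 dd3)"
    by (simp add: Amat_def C0 smat_zero Dmat_def u0 v0 aa0 ab0 dd1_def dd2_def dd3_def)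
  show ?thesis
    by (rule mderiv_cong[OF d]) (simp add: A0 Psi0_def smat_mat3 mat3_mult)
qed

lemma Psi_inv:
  assumes "x \<noteq> -1"
  shows "Psi k l m x = Linv (d0 u k l m) (d0 v k l m) x ** Psi (k+1) l m x"
    "Psi k l m x = Linv (d2 u k l m) (d2 v k l m) x ** Psi k (l+1) m x"
    "Psi k l m x = Linv (d4 u k l m) (d4 v k l m) x ** Psi k l (m+1) x"
  unfolding Psi_0[OF assms] Psi_2[OF assms] Psi_4[OF assms] matrix_mul_assoc Linv_lat[OF assms]
  by simp_all

lemma ode_all:
  assumes U: "\<mu> \<in> Udom"
  shows "mderiv (Psi k l m) (Amat \<alpha> \<beta> u v aa ab k l m \<mu> ** Psi k l m \<mu>) \<mu>"
proof -
  note ne = Udom_ne[OF U]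
  have mu1: "\<mu> \<noteq> -1" using ne by simp
  have xne: "\<And>x. x \<in> Udom \<Longrightarrow> x \<noteq> -1" using Udom_ne by blast
  let ?P = "\<lambda>k l m. mderiv (Psi k l m) (Amat \<alpha> \<beta> u v aa ab k l m \<mu> ** Psi k l m \<mu>) \<mu>"
  have f0: "?P (k+1) l m" if h: "?P k l m" for k l m
  proof (rule ode_fwd[where Lf="Lmat (d0 u k l m) (d0 v k l m)" and H="Hm (d0 u k l m) (d0 v k l m)"
      and A="Amat \<alpha> \<beta> u v aa ab k l m \<mu>" and P="Psi k l m" and S=Udom])
    show "mderiv (Psi k l m) (Amat \<alpha> \<beta> u v aa ab k l m \<mu> ** Psi k l m \<mu>) \<mu>" by (rule h)
    show "x \<in> Udom \<Longrightarrow> Psi (k+1) l m x = L0 k l m x ** Psi k l m x" for x using Psi_0 xne by blast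
    show "Amat \<alpha> \<beta> u v aa ab (k+1) l m \<mu> ** L0 k l m \<mu> - L0 k l m \<mu> ** Amat \<alpha> \<beta> u v aa ab k l m \<mu>
      = Hm (d0 u k l m) (d0 v k l m)" using compat0 ne by blast
  qed (simp_all add: Udom_facts U mderiv_Lmat)
  have b0: "?P k l m" if h: "?P (k+1) l m" for k l m
  proof (rule ode_bwd[where Li="Linv (d0 u k l m) (d0 v k l m)" and H="Hm (d0 u k l m) (d0 v k l m)"
      and A'="Amat \<alpha> \<beta> u v aa ab (k+1) l m \<mu>" and Q="Psi (k+1) l m" and S=Udom and Lm="L0 k l m \<mu>"])
    show "mderiv (Psi (k+1) l m) (Amat \<alpha> \<beta> u v aa ab (k+1) l m \<mu> ** Psi (k+1) l m \<mu>) \<mu>" by (rule h)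
    show "x \<in> Udom \<Longrightarrow> Psi k l m x = Linv (d0 u k l m) (d0 v k l m) x ** Psi (k+1) l m x" for x
      using Psi_inv(1) xne by blast
    show "Amat \<alpha> \<beta> u v aa ab (k+1) l m \<mu> ** L0 k l m \<mu> - L0 k l m \<mu> ** Amat \<alpha> \<beta> u v aa ab k l m \<mu>
      = Hm (d0 u k l m) (d0 v k l m)" using compat0 ne by blast
    show "mderiv (Linv (d0 u k l m) (d0 v k l m))
      (- (Linv (d0 u k l m) (d0 v k l m) \<mu> ** Hm (d0 u k l m) (d0 v k l m) ** Linv (d0 u k l m) (d0 v k l m) \<mu>)) \<mu>"
      by (rule mderiv_Linv) (simp_all add: mu1)
  qed (simp_all add: Udom_facts U Linv_lat mu1)
  have f2: "?P k (l+1) m" if h: "?P k l m" for k l m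
  proof (rule ode_fwd[where Lf="Lmat (d2 u k l m) (d2 v k l m)" and H="Hm (d2 u k l m) (d2 v k l m)"
      and A="Amat \<alpha> \<beta> u v aa ab k l m \<mu>" and P="Psi k l m" and S=Udom])
    show "mderiv (Psi k l m) (Amat \<alpha> \<beta> u v aa ab k l m \<mu> ** Psi k l m \<mu>) \<mu>" by (rule h)
    show "x \<in> Udom \<Longrightarrow> Psi k (l+1) m x = L2 k l m x ** Psi k l m x" for x using Psi_2 xne by blast
    show "Amat \<alpha> \<beta> u v aa ab k (l+1) m \<mu> ** L2 k l m \<mu> - L2 k l m \<mu> ** Amat \<alpha> \<beta> u v aa ab k l m \<mu>
      = Hm (d2 u k l m) (d2 v k l m)" using compat2 ne by blast
  qed (simp_all add: Udom_facts U mderiv_Lmat)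
  have b2: "?P k l m" if h: "?P k (l+1) m" for k l m
  proof (rule ode_bwd[where Li="Linv (d2 u k l m) (d2 v k l m)" and H="Hm (d2 u k l m) (d2 v k l m)"
      and A'="Amat \<alpha> \<beta> u v aa ab k (l+1) m \<mu>" and Q="Psi k (l+1) m" and S=Udom and Lm="L2 k l m \<mu>"])
    show "mderiv (Psi k (l+1) m) (Amat \<alpha> \<beta> u v aa ab k (l+1) m \<mu> ** Psi k (l+1) m \<mu>) \<mu>" by (rule h)
    show "x \<in> Udom \<Longrightarrow> Psi k l m x = Linv (d2 u k l m) (d2 v k l m) x ** Psi k (l+1) m x" for x
      using Psi_inv(2) xne by blast
    show "Amat \<alpha> \<beta> u v aa ab k (l+1) m \<mu> ** L2 k l m \<mu> - L2 k l m \<mu> ** Amat \<alpha> \<beta> u v aa ab k l m \<mu>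
      = Hm (d2 u k l m) (d2 v k l m)" using compat2 ne by blast
    show "mderiv (Linv (d2 u k l m) (d2 v k l m))
      (- (Linv (d2 u k l m) (d2 v k l m) \<mu> ** Hm (d2 u k l m) (d2 v k l m) ** Linv (d2 u k l m) (d2 v k l m) \<mu>)) \<mu>"
      by (rule mderiv_Linv) (simp_all add: mu1)
  qed (simp_all add: Udom_facts U Linv_lat mu1)
  have f4: "?P k l (m+1)" if h: "?P k l m" for k l m
  proof (rule ode_fwd[where Lf="Lmat (d4 u k l m) (d4 v k l m)" and H="Hm (d4 u k l m) (d4 v k l m)"
      and A="Amat \<alpha> \<beta> u v aa ab k l m \<mu>" and P="Psi k l m" and S=Udom])
    show "mderiv (Psi k l m) (Amat \<alpha> \<beta> u v aa ab k l m \<mu> ** Psi k l m \<mu>) \<mu>" by (rule h)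
    show "x \<in> Udom \<Longrightarrow> Psi k l (m+1) x = L4 k l m x ** Psi k l m x" for x using Psi_4 xne by blast
    show "Amat \<alpha> \<beta> u v aa ab k l (m+1) \<mu> ** L4 k l m \<mu> - L4 k l m \<mu> ** Amat \<alpha> \<beta> u v aa ab k l m \<mu>
      = Hm (d4 u k l m) (d4 v k l m)" using compat4 ne by blast
  qed (simp_all add: Udom_facts U mderiv_Lmat)
  have b4: "?P k l m" if h: "?P k l (m+1)" for k l m
  proof (rule ode_bwd[where Li="Linv (d4 u k l m) (d4 v k l m)" and H="Hm (d4 u k l m) (d4 v k l m)"
      and A'="Amat \<alpha> \<beta> u v aa ab k l (m+1) \<mu>" and Q="Psi k l (m+1)" and S=Udom and Lm="L4 k l m \<mu>"])
    show "mderiv (Psi k l (m+1)) (Amat \<alpha> \<beta> u v aa ab k l (m+1) \<mu> ** Psi k l (m+1) \<mu>) \<mu>" by (rule h)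
    show "x \<in> Udom \<Longrightarrow> Psi k l m x = Linv (d4 u k l m) (d4 v k l m) x ** Psi k l (m+1) x" for x
      using Psi_inv(3) xne by blast
    show "Amat \<alpha> \<beta> u v aa ab k l (m+1) \<mu> ** L4 k l m \<mu> - L4 k l m \<mu> ** Amat \<alpha> \<beta> u v aa ab k l m \<mu>
      = Hm (d4 u k l m) (d4 v k l m)" using compat4 ne by blast
    show "mderiv (Linv (d4 u k l m) (d4 v k l m))
      (- (Linv (d4 u k l m) (d4 v k l m) \<mu> ** Hm (d4 u k l m) (d4 v k l m) ** Linv (d4 u k l m) (d4 v k l m) \<mu>)) \<mu>"
      by (rule mderiv_Linv) (simp_all add: mu1)
  qed (simp_all add: Udom_facts U Linv_lat mu1)
  have base: "?P 0 0 0" unfolding Psi_00 by (rule mderiv_Psi0[OF U])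
  have s0: "?P k 0 0" for k
    by (rule int_induct2[where P="\<lambda>k. ?P k 0 0"]) (use base f0 b0 in auto)
  have s2: "?P k l 0" for k l
    by (rule int_induct2[where P="\<lambda>l. ?P k l 0"]) (use s0 f2 b2 in auto)
  show ?thesis
    by (rule int_induct2[where P="\<lambda>m. ?P k l m"]) (use s2 f4 b4 in auto)
qed

end

context lat
begin

lemma main_a: "vertex_fun aa \<and> vertex_fun ab \<and>
     (\<forall>k l m. d0 aa k l m = v k l m * d0 u k l m \<and>
              d2 aa k l m = v k l m * d2 u k l m \<and>
              d4 aa k l m = v k l m * d4 u k l m) \<and>
     (\<forall>k l m. d0 ab k l m = u (k+1) l m * d0 v k l m \<and>
              d2 ab k l m = u k (l+1) m * d2 v k l m \<and>
              d4 ab k l m = u k l (m+1) * d4 v k l m)"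
  using aa_vert ab_vert d0_aa d2_aa d4_aa d0_ab d2_ab d4_ab by blast

lemma main_all: "\<forall>\<mu>\<in>Udom. \<forall>k l m.
        det (Psi k l m \<mu>) \<noteq> 0 \<and>
        (\<forall>n::int. Psi (k+n) (l+n) (m+n) \<mu> = smat ((1 + \<mu>) powi n) (Psi k l m \<mu>)) \<and>
        Psi (k+1) l m \<mu> = Lmat (d0 u k l m) (d0 v k l m) \<mu> ** Psi k l m \<mu> \<and>
        Psi k (l+1) m \<mu> = Lmat (d2 u k l m) (d2 v k l m) \<mu> ** Psi k l m \<mu> \<and>
        Psi k l (m+1) \<mu> = Lmat (d4 u k l m) (d4 v k l m) \<mu> ** Psi k l m \<mu> \<and>
        (\<forall>i j. ((\<lambda>x. Psi k l m x $ i $ j) has_field_derivative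
                 (Amat \<alpha> \<beta> u v aa ab k l m \<mu> ** Psi k l m \<mu>) $ i $ j) (at \<mu>))"
proof (intro ballI allI)
  fix \<mu> k l m
  assume U: "\<mu> \<in> Udom"
  have mu1: "\<mu> \<noteq> -1" using Udom_ne[OF U] by simp
  show "det (Psi k l m \<mu>) \<noteq> 0 \<and>
        (\<forall>n::int. Psi (k+n) (l+n) (m+n) \<mu> = smat ((1 + \<mu>) powi n) (Psi k l m \<mu>)) \<and>
        Psi (k+1) l m \<mu> = Lmat (d0 u k l m) (d0 v k l m) \<mu> ** Psi k l m \<mu> \<and>
        Psi k (l+1) m \<mu> = Lmat (d2 u k l m) (d2 v k l m) \<mu> ** Psi k l m \<mu> \<and>
        Psi k l (m+1) \<mu> = Lmat (d4 u k l m) (d4 v k l m) \<mu> ** Psi k l m \<mu> \<and>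
        (\<forall>i j. ((\<lambda>x. Psi k l m x $ i $ j) has_field_derivative
                 (Amat \<alpha> \<beta> u v aa ab k l m \<mu> ** Psi k l m \<mu>) $ i $ j) (at \<mu>))"
    using det_Psi[OF mu1] Psi_shift[OF mu1] Psi_0[OF mu1] Psi_2[OF mu1] Psi_4[OF mu1]
      ode_all[OF U, of k l m] unfolding mderiv_def by blast
qed

end

theorem theorem19:
  fixes u v :: vfun and \<alpha> \<beta> :: complex
  assumes u_vert: "vertex_fun u" and v_vert: "vertex_fun v"
    and u0: "u 0 0 0 = 0" and v0: "v 0 0 0 = 0"
    and nondeg_f: "\<forall>k l m. d0 u k l m \<noteq> 0 \<and> d2 u k l m \<noteq> 0 \<and> d4 u k l m \<noteq> 0"
    and nondeg_g: "\<forall>k l m. d0 v k l m \<noteq> 0 \<and> d2 v k l m \<noteq> 0 \<and> d4 v k l m \<noteq> 0"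
    and nondeg_den: "\<forall>k l m.
          d0 u k l m * d0 v k l m + d0 v k l m * d3 u k l m + d3 u k l m * d3 v k l m \<noteq> 0 \<and>
          d2 u k l m * d2 v k l m + d2 v k l m * d5 u k l m + d5 u k l m * d5 v k l m \<noteq> 0 \<and>
          d4 u k l m * d4 v k l m + d4 v k l m * d1 u k l m + d1 u k l m * d1 v k l m \<noteq> 0"
    and tri: "triangle_eqs u v"
    and constr_u: "\<forall>k l m. \<alpha> * u k l m =
          of_int k * (d0 u k l m * d0 v k l m * d3 u k l m) /
            (d0 u k l m * d0 v k l m + d0 v k l m * d3 u k l m + d3 u k l m * d3 v k l m)
        + of_int l * (d2 u k l m * d2 v k l m * d5 u k l m) /
            (d2 u k l m * d2 v k l m + d2 v k l m * d5 u k l m + d5 u k l m * d5 v k l m)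
        + of_int m * (d4 u k l m * d4 v k l m * d1 u k l m) /
            (d4 u k l m * d4 v k l m + d4 v k l m * d1 u k l m + d1 u k l m * d1 v k l m)"
    and constr_v: "\<forall>k l m. \<beta> * v k l m =
          of_int k * (d0 v k l m * d3 u k l m * d3 v k l m) /
            (d0 u k l m * d0 v k l m + d0 v k l m * d3 u k l m + d3 u k l m * d3 v k l m)
        + of_int l * (d2 v k l m * d5 u k l m * d5 v k l m) /
            (d2 u k l m * d2 v k l m + d2 v k l m * d5 u k l m + d5 u k l m * d5 v k l m)
        + of_int m * (d4 v k l m * d1 u k l m * d1 v k l m) /
            (d4 u k l m * d4 v k l m + d4 v k l m * d1 u k l m + d1 u k l m * d1 v k l m)"
  shows "\<exists>(a :: vfun) (a' :: vfun) (U :: complex set)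
           (\<Psi> :: int \<Rightarrow> int \<Rightarrow> int \<Rightarrow> complex \<Rightarrow> complex^3^3).
     vertex_fun a \<and> vertex_fun a' \<and>
     (\<forall>k l m. d0 a k l m = v k l m * d0 u k l m \<and>
              d2 a k l m = v k l m * d2 u k l m \<and>
              d4 a k l m = v k l m * d4 u k l m) \<and>
     (\<forall>k l m. d0 a' k l m = u (k+1) l m * d0 v k l m \<and>
              d2 a' k l m = u k (l+1) m * d2 v k l m \<and>
              d4 a' k l m = u k l (m+1) * d4 v k l m) \<and>
     open U \<and> connected U \<and> U \<noteq> {} \<and> 0 \<notin> U \<and> -1 \<notin> U \<and>
     (\<forall>\<mu>\<in>U. \<forall>k l m.
        det (\<Psi> k l m \<mu>) \<noteq> 0 \<and>
        (\<forall>n::int. \<Psi> (k+n) (l+n) (m+n) \<mu> = smat ((1 + \<mu>) powi n) (\<Psi> k l m \<mu>)) \<and>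
        \<Psi> (k+1) l m \<mu> = Lmat (d0 u k l m) (d0 v k l m) \<mu> ** \<Psi> k l m \<mu> \<and>
        \<Psi> k (l+1) m \<mu> = Lmat (d2 u k l m) (d2 v k l m) \<mu> ** \<Psi> k l m \<mu> \<and>
        \<Psi> k l (m+1) \<mu> = Lmat (d4 u k l m) (d4 v k l m) \<mu> ** \<Psi> k l m \<mu> \<and>
        (\<forall>i j. ((\<lambda>x. \<Psi> k l m x $ i $ j) has_field_derivative
                 (Amat \<alpha> \<beta> u v a a' k l m \<mu> ** \<Psi> k l m \<mu>) $ i $ j) (at \<mu>)))"
proof -
  have "lat u v \<alpha> \<beta>"
    unfolding lat_def using u_vert v_vert u0 v0 nondeg_f nondeg_g nondeg_den tri constr_u constr_v
    by blast
  then interpret L: lat u v \<alpha> \<beta> .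
  show ?thesis
    apply (rule exI[where x = "L.aa"])
    apply (rule exI[where x = "L.ab"])
    apply (rule exI[where x = Udom])
    apply (rule exI[where x = "L.Psi"])
    using L.main_a L.main_all Udom_facts by blast
qed


end
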